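(* Let $m\ge2$, $k\ge1$, $b=k(m^2-m)$, and let $\Delta$ be the simplicial complex whose Stanley–Reisner ring is $S/\mathrm{LM}(\mathcal I^{m,m}_{m,k})$. Then $\Delta$ has dimension $k(m^2-1)-1$, and for $1\le l\le k(m^2-1)$ the number $f_{l-1}$ of $(l-1)$-dimensional faces of $\Delta$ (faces with $l$ vertices) equals the coefficient of $x^l$ in the polynomial $$\Big(\sum_{j=0}^{m-1}\binom{m}{j}x^j\Big)^{k}\,(1+x)^{b}.$$ In particular $f_{k(m^2-1)-1}=m^k$.
   Context: Let $F$ be an algebraically closed field, $S=F[x^{(l)}_{i,j}:1\le i,j\le m,\ 0\le l\le k-1]$, and $X(t)$ the $m\times m$ matrix over $S[t]/(t^k)$ with entries $x_{i,j}(t)=\sum_{l=0}^{k-1}x^{(l)}_{i,j}t^l$. $\mathcal I^{m,m}_{m,k}$ is the ideal of $S$ generated by the coefficients of all powers of $t$ of $\det X(t)$. Variables are ordered by $x^{(l)}_{i,j}>x^{(l')}_{i',j'}$ iff $l>l'$, or $l=l'$ and $(i,j)$ precedes $(i',j')$ lexicographically; monomials are ordered by the graded reverse lexicographic order for this variable order. $\mathrm{LM}(\mathcal I^{m,m}_{m,k})$ is the ideal generated by the leading monomials of all elements of $\mathcal I^{m,m}_{m,k}$; it is generated by squarefree monomials. The Stanley–Reisner complex of a squarefree monomial ideal $I$ contained in the square of the maximal homogeneous ideal is the simplicial complex on the set of variables whose faces are the subsets of variables whose product is not in $I$. *)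

theory Defs
  imports "HOL-Library.Poly_Mapping" "HOL-Computational_Algebra.Polynomial"
    "Jordan_Normal_Form.Determinant"
begin

text \<open>Variables x^{(l)}_{i,j} are encoded as triples (l, i, j) with 0-based
  indices i, j < m and l < k.\<close>

type_synonym var = "nat \<times> nat \<times> nat"
type_synonym monomial = "var \<Rightarrow>\<^sub>0 nat"
type_synonym 'a mpoly = "monomial \<Rightarrow>\<^sub>0 'a"

definition vars :: "nat \<Rightarrow> nat \<Rightarrow> var set" where
  "vars m k = {(l, i, j). l < k \<and> i < m \<and> j < m}"

definition S_ring :: "nat \<Rightarrow> nat \<Rightarrow> 'a::comm_ring_1 mpoly set" where
  "S_ring m k = {p. \<forall>\<alpha>\<in>Poly_Mapping.keys p. Poly_Mapping.keys \<alpha> \<subseteq> vars m k}"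

definition Var :: "var \<Rightarrow> 'a::comm_ring_1 mpoly" where
  "Var v = Poly_Mapping.single (Poly_Mapping.single v 1) 1"

definition xt :: "nat \<Rightarrow> nat \<Rightarrow> nat \<Rightarrow> 'a::comm_ring_1 mpoly poly" where
  "xt k i j = (\<Sum>l<k. Polynomial.monom (Var (l, i, j)) l)"

definition Xt :: "nat \<Rightarrow> nat \<Rightarrow> 'a::comm_ring_1 mpoly poly mat" where
  "Xt m k = mat m m (\<lambda>(i, j). xt k i j)"

text \<open>Generators: coefficients of t^0, ..., t^{k-1} of det X(t)
  (i.e. the coefficients of det X(t) computed in S[t]/(t^k)).\<close>
definition det_gens :: "nat \<Rightarrow> nat \<Rightarrow> 'a::comm_ring_1 mpoly set" where
  "det_gens m k = {coeff (det (Xt m k)) l | l. l < k}"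

definition ideal_gen :: "'a::comm_ring_1 mpoly set \<Rightarrow> 'a mpoly set \<Rightarrow> 'a mpoly set" where
  "ideal_gen R G = {p. \<exists>H c. finite H \<and> H \<subseteq> G \<and> (\<forall>g\<in>H. c g \<in> R) \<and>
                          p = (\<Sum>g\<in>H. c g * g)}"

definition I_det :: "nat \<Rightarrow> nat \<Rightarrow> 'a::comm_ring_1 mpoly set" where
  "I_det m k = ideal_gen (S_ring m k) (det_gens m k)"

text \<open>Variable order: x^{(l)}_{i,j} > x^{(l')}_{i',j'} iff l > l', or l = l' and
  (i,j) precedes (i',j') lexicographically.  var_less v w means v < w.\<close>
definition var_less :: "var \<Rightarrow> var \<Rightarrow> bool" where
  "var_less v w = (case v of (l, i, j) \<Rightarrow> case w of (l', i', j') \<Rightarrow>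
      l < l' \<or> (l = l' \<and> (i' < i \<or> (i' = i \<and> j' < j))))"

definition mdeg :: "monomial \<Rightarrow> nat" where
  "mdeg \<alpha> = (\<Sum>v\<in>Poly_Mapping.keys \<alpha>. Poly_Mapping.lookup \<alpha> v)"

definition grevlex_less :: "monomial \<Rightarrow> monomial \<Rightarrow> bool" where
  "grevlex_less \<beta> \<alpha> = (mdeg \<beta> < mdeg \<alpha> \<or>
     (mdeg \<beta> = mdeg \<alpha> \<and> \<beta> \<noteq> \<alpha> \<and>
       (let v = (THE v. Poly_Mapping.lookup \<alpha> v \<noteq> Poly_Mapping.lookup \<beta> v \<and>
                   (\<forall>w. Poly_Mapping.lookup \<alpha> w \<noteq> Poly_Mapping.lookup \<beta> w \<longrightarrow> w = v \<or> var_less v w))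
        in Poly_Mapping.lookup \<alpha> v < Poly_Mapping.lookup \<beta> v)))"

definition lead_mon :: "'a::zero mpoly \<Rightarrow> monomial" where
  "lead_mon p = (THE \<alpha>. \<alpha> \<in> Poly_Mapping.keys p \<and> (\<forall>\<beta>\<in>Poly_Mapping.keys p. \<beta> \<noteq> \<alpha> \<longrightarrow> grevlex_less \<beta> \<alpha>))"

definition mon_poly :: "monomial \<Rightarrow> 'a::comm_ring_1 mpoly" where
  "mon_poly \<alpha> = Poly_Mapping.single \<alpha> 1"

definition LM_ideal :: "'a::comm_ring_1 mpoly set \<Rightarrow> 'a mpoly set \<Rightarrow> 'a mpoly set" where
  "LM_ideal R I = ideal_gen R {mon_poly (lead_mon p) | p. p \<in> I \<and> p \<noteq> 0}"

definition sqfree_mon :: "var set \<Rightarrow> monomial" where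
  "sqfree_mon A = (\<Sum>v\<in>A. Poly_Mapping.single v 1)"

definition SR_complex :: "var set \<Rightarrow> 'a::comm_ring_1 mpoly set \<Rightarrow> var set set" where
  "SR_complex V J = {A. A \<subseteq> V \<and> mon_poly (sqfree_mon A) \<notin> J}"

definition sc_dim :: "'v set set \<Rightarrow> int" where
  "sc_dim \<Delta> = int (Max (card ` \<Delta>)) - 1"

definition f_vec :: "'v set set \<Rightarrow> nat \<Rightarrow> nat" where
  "f_vec \<Delta> l = card {A \<in> \<Delta>. card A = l}"

end

theory Submission
  imports Defs
begin


section \<open>Variable order\<close>

lemma var_less_irrefl: "\<not> var_less v v"
  by (cases v) (auto simp: var_less_def)

lemma var_less_trans: "var_less u v \<Longrightarrow> var_less v w \<Longrightarrow> var_less u w"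
  by (cases u; cases v; cases w) (auto simp: var_less_def)

lemma var_less_total: "v \<noteq> w \<Longrightarrow> var_less v w \<or> var_less w v"
  by (cases v; cases w) (auto simp: var_less_def)

lemma var_less_asym: "var_less v w \<Longrightarrow> \<not> var_less w v"
  using var_less_trans var_less_irrefl by blast

lemma var_less_simp: "var_less (l, i, j) (l', i', j') \<longleftrightarrow> l < l' \<or> (l = l' \<and> (i' < i \<or> (i' = i \<and> j' < j)))"
  by (simp add: var_less_def)

lemma finite_has_min:
  assumes "finite A" "A \<noteq> {}"
    and tr: "\<And>x y z. R x y \<Longrightarrow> R y z \<Longrightarrow> R x z"
    and tot: "\<And>x y. x \<noteq> y \<Longrightarrow> R x y \<or> R y x"
  shows "\<exists>x\<in>A. \<forall>y\<in>A. y \<noteq> x \<longrightarrow> R x y"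
  using assms(1,2)
proof (induction A rule: finite_ne_induct)
  case (singleton x) then show ?case by auto
next
  case (insert a F)
  then obtain x where x: "x \<in> F" "\<forall>y\<in>F. y \<noteq> x \<longrightarrow> R x y" by blast
  show ?case
  proof (cases "R a x")
    case True
    have "\<forall>y\<in>insert a F. y \<noteq> a \<longrightarrow> R a y"
    proof (intro ballI impI)
      fix y assume "y \<in> insert a F" "y \<noteq> a"
      then have "y \<in> F" by simp
      show "R a y"
      proof (cases "y = x")
        case True then show ?thesis using \<open>R a x\<close> by simp
      next
        case False then show ?thesis using x \<open>y \<in> F\<close> tr[OF \<open>R a x\<close>] by blast
      qed
    qed
    then show ?thesis by blast
  next
    case False
    have "x \<noteq> a" using insert.hyps x(1) by blast
    then have "R x a" using tot False by blast
    then show ?thesis using x by auto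
  qed
qed

section \<open>grevlex\<close>

lemma mdeg_superset:
  assumes "finite K" "Poly_Mapping.keys \<alpha> \<subseteq> K"
  shows "mdeg \<alpha> = (\<Sum>v\<in>K. Poly_Mapping.lookup \<alpha> v)"
  unfolding mdeg_def
  by (rule sum.mono_neutral_left) (use assms in \<open>auto simp: in_keys_iff\<close>)

lemma keys_add_nat: "Poly_Mapping.keys (\<alpha> + \<beta> :: 'x \<Rightarrow>\<^sub>0 nat) = Poly_Mapping.keys \<alpha> \<union> Poly_Mapping.keys \<beta>"
  by (auto simp: in_keys_iff lookup_add)

lemma mdeg_add: "mdeg (\<alpha> + \<beta>) = mdeg \<alpha> + mdeg \<beta>"
proof -
  let ?K = "Poly_Mapping.keys \<alpha> \<union> Poly_Mapping.keys \<beta>"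
  have "mdeg (\<alpha> + \<beta>) = (\<Sum>v\<in>?K. Poly_Mapping.lookup (\<alpha> + \<beta>) v)"
    by (rule mdeg_superset) (auto simp: keys_add_nat)
  also have "\<dots> = (\<Sum>v\<in>?K. Poly_Mapping.lookup \<alpha> v) + (\<Sum>v\<in>?K. Poly_Mapping.lookup \<beta> v)"
    by (simp add: lookup_add sum.distrib)
  also have "\<dots> = mdeg \<alpha> + mdeg \<beta>"
    by (simp add: mdeg_superset[symmetric])
  finally show ?thesis .
qed

definition diffset :: "monomial \<Rightarrow> monomial \<Rightarrow> var set" where
  "diffset \<alpha> \<beta> = {w. Poly_Mapping.lookup \<alpha> w \<noteq> Poly_Mapping.lookup \<beta> w}"

lemma finite_diffset: "finite (diffset \<alpha> \<beta>)"
proof -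
  have "diffset \<alpha> \<beta> \<subseteq> Poly_Mapping.keys \<alpha> \<union> Poly_Mapping.keys \<beta>"
    by (auto simp: diffset_def in_keys_iff)
  moreover have "finite (Poly_Mapping.keys \<alpha> \<union> Poly_Mapping.keys \<beta>)" by simp
  ultimately show ?thesis by (rule finite_subset)
qed

lemma diffset_empty: "diffset \<alpha> \<beta> = {} \<longleftrightarrow> \<alpha> = \<beta>"
proof
  assume "diffset \<alpha> \<beta> = {}"
  then have "\<And>v. Poly_Mapping.lookup \<alpha> v = Poly_Mapping.lookup \<beta> v" unfolding diffset_def by blast
  then show "\<alpha> = \<beta>" by (rule poly_mapping_eqI)
qed (simp add: diffset_def)

lemma diffset_min:
  assumes "\<alpha> \<noteq> \<beta>"
  shows "\<exists>v. v \<in> diffset \<alpha> \<beta> \<and> (\<forall>w\<in>diffset \<alpha> \<beta>. w \<noteq> v \<longrightarrow> var_less v w)"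
proof -
  have ne: "diffset \<alpha> \<beta> \<noteq> {}" using diffset_empty assms by blast
  show ?thesis using finite_has_min[OF finite_diffset ne, of var_less] var_less_trans var_less_total by blast
qed

lemma below_min:
  assumes "\<forall>w\<in>diffset \<alpha> \<beta>. w \<noteq> v \<longrightarrow> var_less v w"
  shows "\<forall>w. var_less w v \<longrightarrow> Poly_Mapping.lookup \<alpha> w = Poly_Mapping.lookup \<beta> w"
proof (intro allI impI)
  fix w assume w: "var_less w v"
  show "Poly_Mapping.lookup \<alpha> w = Poly_Mapping.lookup \<beta> w"
  proof (rule ccontr)
    assume "Poly_Mapping.lookup \<alpha> w \<noteq> Poly_Mapping.lookup \<beta> w"
    then have "w \<in> diffset \<alpha> \<beta>" by (simp add: diffset_def)
    moreover have "w \<noteq> v" using w var_less_irrefl by blast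
    ultimately have "var_less v w" using assms by blast
    then show False using w var_less_asym by blast
  qed
qed

definition glt :: "monomial \<Rightarrow> monomial \<Rightarrow> bool" where
  "glt \<beta> \<alpha> \<longleftrightarrow> mdeg \<beta> < mdeg \<alpha> \<or> (mdeg \<beta> = mdeg \<alpha> \<and>
     (\<exists>v. Poly_Mapping.lookup \<alpha> v < Poly_Mapping.lookup \<beta> v \<and>
          (\<forall>w. var_less w v \<longrightarrow> Poly_Mapping.lookup \<alpha> w = Poly_Mapping.lookup \<beta> w)))"

lemma grevlex_glt: "grevlex_less \<beta> \<alpha> \<longleftrightarrow> glt \<beta> \<alpha>"
proof (cases "mdeg \<beta> = mdeg \<alpha> \<and> \<beta> \<noteq> \<alpha>")
  case False
  then show ?thesis
    by (auto simp: grevlex_less_def glt_def)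
next
  case True
  then have ne: "\<alpha> \<noteq> \<beta>" by auto
  obtain v where v: "v \<in> diffset \<alpha> \<beta>" "\<forall>w\<in>diffset \<alpha> \<beta>. w \<noteq> v \<longrightarrow> var_less v w"
    using diffset_min[OF ne] by blast
  have the: "(THE v. Poly_Mapping.lookup \<alpha> v \<noteq> Poly_Mapping.lookup \<beta> v \<and>
                   (\<forall>w. Poly_Mapping.lookup \<alpha> w \<noteq> Poly_Mapping.lookup \<beta> w \<longrightarrow> w = v \<or> var_less v w)) = v"
  proof (rule the_equality)
    show "Poly_Mapping.lookup \<alpha> v \<noteq> Poly_Mapping.lookup \<beta> v \<and>
       (\<forall>w. Poly_Mapping.lookup \<alpha> w \<noteq> Poly_Mapping.lookup \<beta> w \<longrightarrow> w = v \<or> var_less v w)"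
      using v by (auto simp: diffset_def)
  next
    fix u assume u: "Poly_Mapping.lookup \<alpha> u \<noteq> Poly_Mapping.lookup \<beta> u \<and>
       (\<forall>w. Poly_Mapping.lookup \<alpha> w \<noteq> Poly_Mapping.lookup \<beta> w \<longrightarrow> w = u \<or> var_less u w)"
    show "u = v"
    proof (rule ccontr)
      assume uv: "u \<noteq> v"
      have "v = u \<or> var_less u v" using u v(1) unfolding diffset_def by blast
      then have 1: "var_less u v" using uv by blast
      have "u \<in> diffset \<alpha> \<beta>" using u unfolding diffset_def by blast
      then have 2: "var_less v u" using v(2) uv by blast
      show False using 1 2 var_less_asym by blast
    qed
  qed
  have "(\<exists>v'. Poly_Mapping.lookup \<alpha> v' < Poly_Mapping.lookup \<beta> v' \<and>
          (\<forall>w. var_less w v' \<longrightarrow> Poly_Mapping.lookup \<alpha> w = Poly_Mapping.lookup \<beta> w))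
        \<longleftrightarrow> Poly_Mapping.lookup \<alpha> v < Poly_Mapping.lookup \<beta> v"
  proof
    assume "\<exists>v'. Poly_Mapping.lookup \<alpha> v' < Poly_Mapping.lookup \<beta> v' \<and>
          (\<forall>w. var_less w v' \<longrightarrow> Poly_Mapping.lookup \<alpha> w = Poly_Mapping.lookup \<beta> w)"
    then obtain v' where v': "Poly_Mapping.lookup \<alpha> v' < Poly_Mapping.lookup \<beta> v'"
       "\<forall>w. var_less w v' \<longrightarrow> Poly_Mapping.lookup \<alpha> w = Poly_Mapping.lookup \<beta> w" by blast
    have "v' \<in> diffset \<alpha> \<beta>" using v'(1) by (auto simp: diffset_def)
    have "v' = v"
    proof (rule ccontr)
      assume "v' \<noteq> v"
      then have "var_less v v'" using v \<open>v' \<in> diffset \<alpha> \<beta>\<close> by auto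
      then have "Poly_Mapping.lookup \<alpha> v = Poly_Mapping.lookup \<beta> v" using v'(2) by blast
      then show False using v(1) by (simp add: diffset_def)
    qed
    then show "Poly_Mapping.lookup \<alpha> v < Poly_Mapping.lookup \<beta> v" using v' by simp
  next
    assume "Poly_Mapping.lookup \<alpha> v < Poly_Mapping.lookup \<beta> v"
    moreover have "\<forall>w. var_less w v \<longrightarrow> Poly_Mapping.lookup \<alpha> w = Poly_Mapping.lookup \<beta> w"
      using below_min[OF v(2)] .
    ultimately show "\<exists>v'. Poly_Mapping.lookup \<alpha> v' < Poly_Mapping.lookup \<beta> v' \<and>
          (\<forall>w. var_less w v' \<longrightarrow> Poly_Mapping.lookup \<alpha> w = Poly_Mapping.lookup \<beta> w)" by blast
  qed
  then show ?thesis using True the by (simp add: grevlex_less_def glt_def Let_def)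
qed

lemma glt_irrefl: "\<not> glt \<alpha> \<alpha>"
  by (auto simp: glt_def)

lemma glt_trans:
  assumes "glt \<gamma> \<beta>" "glt \<beta> \<alpha>" shows "glt \<gamma> \<alpha>"
proof (cases "mdeg \<gamma> = mdeg \<beta> \<and> mdeg \<beta> = mdeg \<alpha>")
  case False
  then show ?thesis using assms by (auto simp: glt_def)
next
  case True
  obtain v1 where v1: "Poly_Mapping.lookup \<beta> v1 < Poly_Mapping.lookup \<gamma> v1"
    "\<forall>w. var_less w v1 \<longrightarrow> Poly_Mapping.lookup \<beta> w = Poly_Mapping.lookup \<gamma> w"
    using assms(1) True by (auto simp: glt_def)
  obtain v2 where v2: "Poly_Mapping.lookup \<alpha> v2 < Poly_Mapping.lookup \<beta> v2"
    "\<forall>w. var_less w v2 \<longrightarrow> Poly_Mapping.lookup \<alpha> w = Poly_Mapping.lookup \<beta> w"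
    using assms(2) True by (auto simp: glt_def)
  consider "v1 = v2" | "var_less v1 v2" | "var_less v2 v1" using var_less_total by blast
  then show ?thesis
  proof cases
    case 1
    have "Poly_Mapping.lookup \<alpha> v1 < Poly_Mapping.lookup \<gamma> v1" using v1 v2 1 by simp
    moreover have "\<forall>w. var_less w v1 \<longrightarrow> Poly_Mapping.lookup \<alpha> w = Poly_Mapping.lookup \<gamma> w"
      using v1 v2 1 by simp
    moreover have "mdeg \<gamma> = mdeg \<alpha>" using True by simp
    ultimately show ?thesis unfolding glt_def by blast
  next
    case 2
    have "Poly_Mapping.lookup \<alpha> v1 = Poly_Mapping.lookup \<beta> v1" using v2(2) 2 by blast
    then have "Poly_Mapping.lookup \<alpha> v1 < Poly_Mapping.lookup \<gamma> v1" using v1 by simp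
    moreover have "\<forall>w. var_less w v1 \<longrightarrow> Poly_Mapping.lookup \<alpha> w = Poly_Mapping.lookup \<gamma> w"
      using v1(2) v2(2) 2 var_less_trans by metis
    moreover have "mdeg \<gamma> = mdeg \<alpha>" using True by simp
    ultimately show ?thesis unfolding glt_def by blast
  next
    case 3
    have "Poly_Mapping.lookup \<beta> v2 = Poly_Mapping.lookup \<gamma> v2" using v1(2) 3 by blast
    then have "Poly_Mapping.lookup \<alpha> v2 < Poly_Mapping.lookup \<gamma> v2" using v2 by simp
    moreover have "\<forall>w. var_less w v2 \<longrightarrow> Poly_Mapping.lookup \<alpha> w = Poly_Mapping.lookup \<gamma> w"
      using v1(2) v2(2) 3 var_less_trans by metis
    moreover have "mdeg \<gamma> = mdeg \<alpha>" using True by simp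
    ultimately show ?thesis unfolding glt_def by blast
  qed
qed

lemma glt_asym: "glt \<beta> \<alpha> \<Longrightarrow> \<not> glt \<alpha> \<beta>"
  using glt_trans glt_irrefl by blast

lemma glt_total: "\<alpha> \<noteq> \<beta> \<Longrightarrow> glt \<alpha> \<beta> \<or> glt \<beta> \<alpha>"
proof -
  assume ne: "\<alpha> \<noteq> \<beta>"
  show ?thesis
  proof (cases "mdeg \<alpha> = mdeg \<beta>")
    case False then show ?thesis by (auto simp: glt_def)
  next
    case True
    obtain v where v: "v \<in> diffset \<alpha> \<beta>" "\<forall>w\<in>diffset \<alpha> \<beta>. w \<noteq> v \<longrightarrow> var_less v w"
      using diffset_min[OF ne] by blast
    have agree: "\<forall>w. var_less w v \<longrightarrow> Poly_Mapping.lookup \<alpha> w = Poly_Mapping.lookup \<beta> w"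
      using below_min[OF v(2)] .
    have "Poly_Mapping.lookup \<alpha> v < Poly_Mapping.lookup \<beta> v \<or> Poly_Mapping.lookup \<beta> v < Poly_Mapping.lookup \<alpha> v"
      using v(1) by (auto simp: diffset_def)
    then show ?thesis
    proof
      assume "Poly_Mapping.lookup \<alpha> v < Poly_Mapping.lookup \<beta> v"
      moreover have "mdeg \<beta> = mdeg \<alpha>" using True by simp
      ultimately have "glt \<beta> \<alpha>" using agree unfolding glt_def by blast
      then show ?thesis by blast
    next
      assume "Poly_Mapping.lookup \<beta> v < Poly_Mapping.lookup \<alpha> v"
      moreover have "\<forall>w. var_less w v \<longrightarrow> Poly_Mapping.lookup \<beta> w = Poly_Mapping.lookup \<alpha> w" using agree by simp
      ultimately have "glt \<alpha> \<beta>" using True unfolding glt_def by blast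
      then show ?thesis by blast
    qed
  qed
qed

lemma glt_add:
  assumes "glt \<beta> \<alpha>" shows "glt (\<beta> + \<gamma>) (\<alpha> + \<gamma>)"
  using assms unfolding glt_def by (auto simp: mdeg_add lookup_add)

lemma glt_add_left:
  assumes "glt \<beta> \<alpha>" shows "glt (\<gamma> + \<beta>) (\<gamma> + \<alpha>)"
  using glt_add[OF assms, of \<gamma>] by (simp only: add.commute)


section \<open>Leading terms\<close>

definition ltop :: "'a::comm_ring_1 mpoly \<Rightarrow> monomial \<Rightarrow> 'a \<Rightarrow> bool" where
  "ltop p \<alpha> c \<longleftrightarrow> Poly_Mapping.lookup p \<alpha> = c \<and> c \<noteq> 0 \<and>
     (\<forall>\<beta>\<in>Poly_Mapping.keys p. \<beta> \<noteq> \<alpha> \<longrightarrow> glt \<beta> \<alpha>)"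

lemma top_lead:
  assumes "ltop p \<alpha> c" shows "lead_mon p = \<alpha>"
  unfolding lead_mon_def
proof (rule the_equality)
  show "\<alpha> \<in> Poly_Mapping.keys p \<and> (\<forall>\<beta>\<in>Poly_Mapping.keys p. \<beta> \<noteq> \<alpha> \<longrightarrow> grevlex_less \<beta> \<alpha>)"
    using assms by (auto simp: ltop_def grevlex_glt in_keys_iff)
next
  fix \<gamma> assume g: "\<gamma> \<in> Poly_Mapping.keys p \<and> (\<forall>\<beta>\<in>Poly_Mapping.keys p. \<beta> \<noteq> \<gamma> \<longrightarrow> grevlex_less \<beta> \<gamma>)"
  show "\<gamma> = \<alpha>"
  proof (rule ccontr)
    assume ne: "\<gamma> \<noteq> \<alpha>"
    have "\<alpha> \<in> Poly_Mapping.keys p" using assms by (auto simp: ltop_def in_keys_iff)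
    then have 1: "glt \<alpha> \<gamma>" using g ne by (auto simp: grevlex_glt)
    have 2: "glt \<gamma> \<alpha>" using assms g ne by (auto simp: ltop_def)
    show False using 1 2 glt_asym by blast
  qed
qed

lemma top_keys: "ltop p \<alpha> c \<Longrightarrow> \<alpha> \<in> Poly_Mapping.keys p"
  by (auto simp: ltop_def in_keys_iff)

lemma top_nonzero: "ltop p \<alpha> c \<Longrightarrow> p \<noteq> 0"
  by (auto simp: ltop_def)

lemma lead_exists:
  assumes "p \<noteq> 0"
  shows "ltop p (lead_mon p) (Poly_Mapping.lookup p (lead_mon p))"
proof -
  have ne: "Poly_Mapping.keys p \<noteq> {}" using assms by simp
  obtain x where x: "x \<in> Poly_Mapping.keys p" "\<forall>y\<in>Poly_Mapping.keys p. y \<noteq> x \<longrightarrow> glt y x"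
    using finite_has_min[OF finite_keys ne, of "\<lambda>a b. glt b a"] glt_trans glt_total by blast
  have t: "ltop p x (Poly_Mapping.lookup p x)"
    using x by (auto simp: ltop_def in_keys_iff)
  then show ?thesis using top_lead[OF t] by simp
qed

lemma top_single: "c \<noteq> 0 \<Longrightarrow> ltop (Poly_Mapping.single \<alpha> c) \<alpha> c"
  by (auto simp: ltop_def)

lemma top_split:
  assumes "ltop p \<alpha> a"
  shows "p = Poly_Mapping.single \<alpha> a + (p - Poly_Mapping.single \<alpha> a)"
    and "\<forall>\<beta>\<in>Poly_Mapping.keys (p - Poly_Mapping.single \<alpha> a). glt \<beta> \<alpha>"
proof -
  show "p = Poly_Mapping.single \<alpha> a + (p - Poly_Mapping.single \<alpha> a)" by simp
  show "\<forall>\<beta>\<in>Poly_Mapping.keys (p - Poly_Mapping.single \<alpha> a). glt \<beta> \<alpha>"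
  proof
    fix \<beta> assume b: "\<beta> \<in> Poly_Mapping.keys (p - Poly_Mapping.single \<alpha> a)"
    then have l: "Poly_Mapping.lookup p \<beta> - Poly_Mapping.lookup (Poly_Mapping.single \<alpha> a) \<beta> \<noteq> 0"
      by (simp add: in_keys_iff lookup_minus)
    have ne: "\<beta> \<noteq> \<alpha>"
    proof
      assume "\<beta> = \<alpha>" then show False using l assms by (simp add: ltop_def)
    qed
    then have "Poly_Mapping.lookup p \<beta> \<noteq> 0" using l by (simp add: lookup_single)
    then show "glt \<beta> \<alpha>" using assms ne by (auto simp: ltop_def in_keys_iff)
  qed
qed

lemma keys_single_mult:
  "Poly_Mapping.keys (Poly_Mapping.single \<alpha> a * q) \<subseteq> {\<alpha> + b | b. b \<in> Poly_Mapping.keys q}"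
  using keys_mult[of "Poly_Mapping.single \<alpha> a" q] by (auto split: if_splits)

lemma low_add:
  assumes "\<forall>\<beta>\<in>Poly_Mapping.keys p. glt \<beta> \<alpha>" "\<forall>\<beta>\<in>Poly_Mapping.keys q. glt \<beta> \<alpha>"
  shows "\<forall>\<beta>\<in>Poly_Mapping.keys (p + q). glt \<beta> \<alpha>"
  using keys_add[of p q] assms by blast

lemma top_add_low:
  assumes "ltop p \<alpha> a" "\<forall>\<beta>\<in>Poly_Mapping.keys q. glt \<beta> \<alpha>"
  shows "ltop (p + q) \<alpha> a"
proof -
  have q0: "Poly_Mapping.lookup q \<alpha> = 0"
  proof (rule ccontr)
    assume "Poly_Mapping.lookup q \<alpha> \<noteq> 0"
    then have "\<alpha> \<in> Poly_Mapping.keys q" by (simp add: in_keys_iff)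
    then show False using assms(2) glt_irrefl by blast
  qed
  have "\<forall>\<beta>\<in>Poly_Mapping.keys (p + q). \<beta> \<noteq> \<alpha> \<longrightarrow> glt \<beta> \<alpha>"
    using keys_add[of p q] assms by (auto simp: ltop_def)
  then show ?thesis using assms(1) q0 by (simp add: ltop_def lookup_add)
qed

lemma top_mult:
  fixes p q :: "'a::comm_ring_1 mpoly"
  assumes p: "ltop p \<alpha> a" and q: "ltop q \<beta> b" and ab: "a * b \<noteq> 0"
  shows "ltop (p * q) (\<alpha> + \<beta>) (a * b)"
proof -
  define P where "P = p - Poly_Mapping.single \<alpha> a"
  define Q where "Q = q - Poly_Mapping.single \<beta> b"
  have pe: "p = Poly_Mapping.single \<alpha> a + P" and P: "\<forall>\<gamma>\<in>Poly_Mapping.keys P. glt \<gamma> \<alpha>"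
    using top_split[OF p] unfolding P_def by auto
  have qe: "q = Poly_Mapping.single \<beta> b + Q" and Q: "\<forall>\<gamma>\<in>Poly_Mapping.keys Q. glt \<gamma> \<beta>"
    using top_split[OF q] unfolding Q_def by auto
  have eq: "p * q = Poly_Mapping.single (\<alpha> + \<beta>) (a * b) + (Poly_Mapping.single \<alpha> a * Q + P * q)"
  proof -
    have "p * q = Poly_Mapping.single \<alpha> a * q + P * q" by (subst pe) (simp add: distrib_right)
    also have "Poly_Mapping.single \<alpha> a * q = Poly_Mapping.single (\<alpha> + \<beta>) (a * b) + Poly_Mapping.single \<alpha> a * Q"
      by (subst qe) (simp add: distrib_left mult_single)
    finally show ?thesis by (simp add: add.assoc)
  qed
  have 1: "\<forall>\<gamma>\<in>Poly_Mapping.keys (Poly_Mapping.single \<alpha> a * Q). glt \<gamma> (\<alpha> + \<beta>)"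
  proof
    fix \<gamma> assume "\<gamma> \<in> Poly_Mapping.keys (Poly_Mapping.single \<alpha> a * Q)"
    then obtain c where c: "c \<in> Poly_Mapping.keys Q" "\<gamma> = \<alpha> + c" using keys_single_mult by blast
    show "glt \<gamma> (\<alpha> + \<beta>)" using c Q glt_add_left by blast
  qed
  have 2: "\<forall>\<gamma>\<in>Poly_Mapping.keys (P * q). glt \<gamma> (\<alpha> + \<beta>)"
  proof
    fix \<gamma> assume "\<gamma> \<in> Poly_Mapping.keys (P * q)"
    then obtain c d where cd: "c \<in> Poly_Mapping.keys P" "d \<in> Poly_Mapping.keys q" "\<gamma> = c + d"
      using keys_mult[of P q] by blast
    have g1: "glt (c + d) (\<alpha> + d)" using glt_add cd P by blast
    show "glt \<gamma> (\<alpha> + \<beta>)"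
    proof (cases "d = \<beta>")
      case True then show ?thesis using g1 cd by simp
    next
      case False
      then have "glt d \<beta>" using q cd by (auto simp: ltop_def)
      then have "glt (\<alpha> + d) (\<alpha> + \<beta>)" by (rule glt_add_left)
      then show ?thesis using g1 cd glt_trans by blast
    qed
  qed
  have "ltop (Poly_Mapping.single (\<alpha> + \<beta>) (a * b) + (Poly_Mapping.single \<alpha> a * Q + P * q)) (\<alpha> + \<beta>) (a * b)"
    by (rule top_add_low[OF top_single[OF ab] low_add[OF 1 2]])
  then show ?thesis using eq by simp
qed


section \<open>Polynomials over a finite variable set\<close>

definition SR :: "var set \<Rightarrow> 'a::comm_ring_1 mpoly set" where
  "SR V = {p. \<forall>\<alpha>\<in>Poly_Mapping.keys p. Poly_Mapping.keys \<alpha> \<subseteq> V}"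

lemma S_ring_SR: "S_ring m k = SR (vars m k)"
  by (simp add: S_ring_def SR_def)

lemma keys_diff_sub: "Poly_Mapping.keys (p - q) \<subseteq> Poly_Mapping.keys p \<union> Poly_Mapping.keys (q :: 'x \<Rightarrow>\<^sub>0 'b::ab_group_add)"
  by (auto simp: in_keys_iff lookup_minus)

lemma SR_0[simp]: "0 \<in> SR V" by (simp add: SR_def)
lemma SR_1[simp]: "1 \<in> SR V" by (simp add: SR_def)

lemma SR_add: "p \<in> SR V \<Longrightarrow> q \<in> SR V \<Longrightarrow> p + q \<in> SR V"
  using keys_add[of p q] by (auto simp: SR_def)

lemma SR_diff: "p \<in> SR V \<Longrightarrow> q \<in> SR V \<Longrightarrow> p - q \<in> SR V"
  using keys_diff_sub[of p q] by (auto simp: SR_def)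

lemma SR_mult: "p \<in> SR V \<Longrightarrow> q \<in> SR V \<Longrightarrow> p * q \<in> SR V"
proof -
  assume p: "p \<in> SR V" and q: "q \<in> SR V"
  show "p * q \<in> SR V" unfolding SR_def mem_Collect_eq
  proof (intro ballI)
    fix \<gamma> assume "\<gamma> \<in> Poly_Mapping.keys (p * q)"
    then obtain a b where "a \<in> Poly_Mapping.keys p" "b \<in> Poly_Mapping.keys q" "\<gamma> = a + b"
      using keys_mult[of p q] by blast
    then show "Poly_Mapping.keys \<gamma> \<subseteq> V" using p q by (auto simp: SR_def keys_add_nat)
  qed
qed

lemma SR_sum: "(\<And>i. i \<in> I \<Longrightarrow> f i \<in> SR V) \<Longrightarrow> sum f I \<in> SR V"
  by (induction I rule: infinite_finite_induct) (auto intro: SR_add)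

lemma SR_single: "Poly_Mapping.keys \<gamma> \<subseteq> V \<Longrightarrow> Poly_Mapping.single \<gamma> c \<in> SR V"
  by (auto simp: SR_def)

section \<open>Divisibility of monomials\<close>

definition mle :: "monomial \<Rightarrow> monomial \<Rightarrow> bool" where
  "mle \<alpha> \<beta> \<longleftrightarrow> (\<forall>v. Poly_Mapping.lookup \<alpha> v \<le> Poly_Mapping.lookup \<beta> v)"

lemma mle_add_diff: assumes "mle \<alpha> \<beta>" shows "\<alpha> + (\<beta> - \<alpha>) = \<beta>"
proof (rule poly_mapping_eqI)
  fix k
  have "Poly_Mapping.lookup \<alpha> k \<le> Poly_Mapping.lookup \<beta> k" using assms unfolding mle_def by blast
  then show "Poly_Mapping.lookup (\<alpha> + (\<beta> - \<alpha>)) k = Poly_Mapping.lookup \<beta> k"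
    by (simp add: lookup_add lookup_minus)
qed

lemma mle_trans: "mle \<alpha> \<beta> \<Longrightarrow> mle \<beta> \<gamma> \<Longrightarrow> mle \<alpha> \<gamma>"
  unfolding mle_def using order_trans by blast

lemma mle_add_right: "mle \<alpha> (\<alpha> + \<gamma>)"
  by (simp add: mle_def lookup_add)

lemma mle_add_left: "mle \<alpha> (\<gamma> + \<alpha>)"
  by (simp add: mle_def lookup_add)

lemma mle_coprime:
  assumes "mle A (B + C)" "\<forall>v. Poly_Mapping.lookup A v = 0 \<or> Poly_Mapping.lookup C v = 0"
  shows "mle A B"
  unfolding mle_def
proof
  fix v
  show "Poly_Mapping.lookup A v \<le> Poly_Mapping.lookup B v"
  proof -
    have "Poly_Mapping.lookup A v \<le> Poly_Mapping.lookup (B + C) v"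
      using assms(1) unfolding mle_def by (rule spec)
    then have 1: "Poly_Mapping.lookup A v \<le> Poly_Mapping.lookup B v + Poly_Mapping.lookup C v"
      by (simp only: lookup_add)
    have "Poly_Mapping.lookup A v = 0 \<or> Poly_Mapping.lookup C v = 0" using assms(2) by (rule spec)
    then show ?thesis
    proof
      assume "Poly_Mapping.lookup A v = 0" then show ?thesis by simp
    next
      assume "Poly_Mapping.lookup C v = 0" then show ?thesis using 1 by simp
    qed
  qed
qed

lemma mle_keys: assumes "mle \<alpha> \<beta>" shows "Poly_Mapping.keys \<alpha> \<subseteq> Poly_Mapping.keys \<beta>"
proof
  fix v assume "v \<in> Poly_Mapping.keys \<alpha>"
  moreover have "Poly_Mapping.lookup \<alpha> v \<le> Poly_Mapping.lookup \<beta> v" using assms unfolding mle_def by blast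
  ultimately show "v \<in> Poly_Mapping.keys \<beta>" by (simp add: in_keys_iff)
qed

section \<open>Well-foundedness\<close>

lemma lookup_le_mdeg: "Poly_Mapping.lookup \<alpha> v \<le> mdeg \<alpha>"
proof (cases "v \<in> Poly_Mapping.keys \<alpha>")
  case True
  then show ?thesis unfolding mdeg_def by (rule member_le_sum) auto
next
  case False then show ?thesis by (simp add: in_keys_iff)
qed

lemma finite_bounded_monomials:
  assumes "finite V"
  shows "finite {\<beta>. Poly_Mapping.keys \<beta> \<subseteq> V \<and> mdeg \<beta> \<le> d}"
proof -
  let ?B = "{\<beta>. Poly_Mapping.keys \<beta> \<subseteq> V \<and> mdeg \<beta> \<le> d}"
  let ?f = "\<lambda>\<beta>. restrict (Poly_Mapping.lookup \<beta>) V"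
  have inj: "inj_on ?f ?B"
  proof (rule inj_onI)
    fix x y assume x: "x \<in> ?B" and y: "y \<in> ?B" and e: "?f x = ?f y"
    show "x = y"
    proof (rule poly_mapping_eqI)
      fix v show "Poly_Mapping.lookup x v = Poly_Mapping.lookup y v"
      proof (cases "v \<in> V")
        case True then show ?thesis using e by (metis restrict_apply')
      next
        case False
        then have "v \<notin> Poly_Mapping.keys x" "v \<notin> Poly_Mapping.keys y" using x y by auto
        then show ?thesis by (simp add: in_keys_iff)
      qed
    qed
  qed
  have "?f ` ?B \<subseteq> PiE V (\<lambda>_. {..d})"
  proof
    fix x assume "x \<in> ?f ` ?B"
    then obtain \<beta> where b: "\<beta> \<in> ?B" "x = ?f \<beta>" by blast
    have "\<And>v. Poly_Mapping.lookup \<beta> v \<le> d" using b(1) lookup_le_mdeg[of \<beta>] order_trans by blast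
    then show "x \<in> PiE V (\<lambda>_. {..d})" using b(2) by (auto simp: PiE_def extensional_def)
  qed
  moreover have "finite (PiE V (\<lambda>_. {..d}))" using assms by (simp add: finite_PiE)
  ultimately have "finite (?f ` ?B)" by (rule finite_subset)
  then show ?thesis using inj finite_image_iff by blast
qed

definition rank :: "var set \<Rightarrow> monomial \<Rightarrow> nat" where
  "rank V \<alpha> = card {\<beta>. Poly_Mapping.keys \<beta> \<subseteq> V \<and> glt \<beta> \<alpha>}"

lemma rank_less:
  assumes "finite V" "glt \<beta> \<alpha>" "Poly_Mapping.keys \<beta> \<subseteq> V"
  shows "rank V \<beta> < rank V \<alpha>"
  unfolding rank_def
proof (rule psubset_card_mono)
  have "{\<beta>. Poly_Mapping.keys \<beta> \<subseteq> V \<and> glt \<beta> \<alpha>} \<subseteq> {\<beta>. Poly_Mapping.keys \<beta> \<subseteq> V \<and> mdeg \<beta> \<le> mdeg \<alpha>}"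
    by (auto simp: glt_def)
  then show "finite {\<beta>. Poly_Mapping.keys \<beta> \<subseteq> V \<and> glt \<beta> \<alpha>}"
    using finite_bounded_monomials[OF assms(1)] by (rule finite_subset)
  show "{\<gamma>. Poly_Mapping.keys \<gamma> \<subseteq> V \<and> glt \<gamma> \<beta>} \<subset> {\<gamma>. Poly_Mapping.keys \<gamma> \<subseteq> V \<and> glt \<gamma> \<alpha>}"
  proof
    show "{\<gamma>. Poly_Mapping.keys \<gamma> \<subseteq> V \<and> glt \<gamma> \<beta>} \<subseteq> {\<gamma>. Poly_Mapping.keys \<gamma> \<subseteq> V \<and> glt \<gamma> \<alpha>}"
      using assms(2) glt_trans by blast
    have "\<beta> \<in> {\<gamma>. Poly_Mapping.keys \<gamma> \<subseteq> V \<and> glt \<gamma> \<alpha>}" using assms by blast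
    moreover have "\<beta> \<notin> {\<gamma>. Poly_Mapping.keys \<gamma> \<subseteq> V \<and> glt \<gamma> \<beta>}" using glt_irrefl by blast
    ultimately show "{\<gamma>. Poly_Mapping.keys \<gamma> \<subseteq> V \<and> glt \<gamma> \<beta>} \<noteq> {\<gamma>. Poly_Mapping.keys \<gamma> \<subseteq> V \<and> glt \<gamma> \<alpha>}"
      by blast
  qed
qed


lemma top_below:
  assumes "ltop p \<beta> c" "glt \<beta> \<delta>"
  shows "\<forall>\<gamma>\<in>Poly_Mapping.keys p. glt \<gamma> \<delta>"
proof
  fix \<gamma> assume "\<gamma> \<in> Poly_Mapping.keys p"
  then have "\<gamma> = \<beta> \<or> glt \<gamma> \<beta>" using assms(1) by (auto simp: ltop_def)
  then show "glt \<gamma> \<delta>" using assms(2) glt_trans by blast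
qed

locale gbl =
  fixes V :: "var set" and n :: nat and g :: "nat \<Rightarrow> 'a::field mpoly"
    and M :: "nat \<Rightarrow> monomial" and cf :: "nat \<Rightarrow> 'a"
  assumes finV: "finite V"
    and gS: "\<And>l. l < n \<Longrightarrow> g l \<in> SR V"
    and gtop: "\<And>l. l < n \<Longrightarrow> ltop (g l) (M l) (cf l)"
    and cop: "\<And>l l'. l < n \<Longrightarrow> l' < n \<Longrightarrow> l \<noteq> l' \<Longrightarrow>
               \<forall>v. Poly_Mapping.lookup (M l) v = 0 \<or> Poly_Mapping.lookup (M l') v = 0"
begin

definition J :: "nat \<Rightarrow> 'a mpoly set" where
  "J j = {(\<Sum>l<j. c l * g l) | c. \<forall>l<j. c l \<in> SR V}"

lemma J_intro: assumes "\<forall>l<j. c l \<in> SR V" "x = (\<Sum>l<j. c l * g l)" shows "x \<in> J j"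
  unfolding J_def by (rule CollectI, rule exI[of _ c]) (simp add: assms)

lemma J_0: "0 \<in> J j"
proof -
  have "(\<Sum>l<j. (0::'a mpoly) * g l) = 0" by simp
  then show ?thesis by (intro J_intro[of j "\<lambda>_. 0"]) auto
qed

lemma J_add: assumes "x \<in> J j" "y \<in> J j" shows "x + y \<in> J j"
proof -
  obtain c where c: "\<forall>l<j. c l \<in> SR V" "x = (\<Sum>l<j. c l * g l)" using assms(1) unfolding J_def by blast
  obtain d where d: "\<forall>l<j. d l \<in> SR V" "y = (\<Sum>l<j. d l * g l)" using assms(2) unfolding J_def by blast
  have "x + y = (\<Sum>l<j. (c l + d l) * g l)" using c d by (simp add: sum.distrib distrib_right)
  moreover have "\<forall>l<j. c l + d l \<in> SR V" using c d SR_add by blast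
  ultimately show ?thesis by (intro J_intro[of j "\<lambda>l. c l + d l"]) auto
qed

lemma J_mult: assumes "x \<in> J j" "s \<in> SR V" shows "x * s \<in> J j"
proof -
  obtain c where c: "\<forall>l<j. c l \<in> SR V" "x = (\<Sum>l<j. c l * g l)" using assms(1) unfolding J_def by blast
  have "x * s = (\<Sum>l<j. c l * g l * s)" using c by (simp add: sum_distrib_right)
  also have "\<dots> = (\<Sum>l<j. (c l * s) * g l)" by (simp add: ac_simps)
  finally have "x * s = (\<Sum>l<j. (c l * s) * g l)" .
  moreover have "\<forall>l<j. c l * s \<in> SR V" using c assms(2) SR_mult by blast
  ultimately show ?thesis by (intro J_intro[of j "\<lambda>l. c l * s"]) auto
qed

lemma J_single: assumes "l < j" "s \<in> SR V" shows "s * g l \<in> J j"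
proof -
  let ?c = "\<lambda>i. if i = l then s else 0"
  have "(\<Sum>i<j. ?c i * g i) = (\<Sum>i<j. if i = l then s * g l else 0)"
    by (rule sum.cong) auto
  also have "\<dots> = s * g l" using assms(1) by (simp add: sum.delta)
  finally have "s * g l = (\<Sum>i<j. ?c i * g i)" by simp
  moreover have "\<forall>i<j. ?c i \<in> SR V" using assms(2) by simp
  ultimately show ?thesis by (intro J_intro[of j ?c]) auto
qed

lemma J_Suc: assumes "h \<in> J (Suc j)" shows "\<exists>c b. c \<in> SR V \<and> b \<in> J j \<and> h = c * g j + b"
proof -
  obtain c where c: "\<forall>l<Suc j. c l \<in> SR V" "h = (\<Sum>l<Suc j. c l * g l)" using assms unfolding J_def by blast
  have "h = c j * g j + (\<Sum>l<j. c l * g l)" using c(2) by (simp add: add.commute)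
  moreover have "(\<Sum>l<j. c l * g l) \<in> J j" using c(1) unfolding J_def by auto
  moreover have "c j \<in> SR V" using c(1) by simp
  ultimately show ?thesis by blast
qed

lemma J_zero: "J 0 = {0}"
  unfolding J_def by auto

lemma reduce:
  assumes "j \<le> n"
  shows "a \<in> SR V \<Longrightarrow> \<exists>a'\<in>SR V. a - a' \<in> J j \<and> (a' = 0 \<or> (\<forall>l<j. \<not> mle (M l) (lead_mon a')))"
proof (induction "rank V (lead_mon a)" arbitrary: a rule: less_induct)
  case less
  show ?case
  proof (cases "a = 0 \<or> (\<forall>l<j. \<not> mle (M l) (lead_mon a))")
    case True
    then show ?thesis using less.prems J_0 by (intro bexI[of _ a]) auto
  next
    case False
    then obtain l where l: "l < j" "mle (M l) (lead_mon a)" and a0: "a \<noteq> 0" by blast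
    have ln: "l < n" using l(1) assms by simp
    define \<alpha> where "\<alpha> = lead_mon a"
    define \<gamma> where "\<gamma> = \<alpha> - M l"
    define d where "d = Poly_Mapping.lookup a \<alpha> / cf l"
    define t where "t = Poly_Mapping.single \<gamma> d * g l"
    have ta: "ltop a \<alpha> (Poly_Mapping.lookup a \<alpha>)" using lead_exists[OF a0] \<alpha>_def by simp
    have cl: "cf l \<noteq> 0" using gtop[OF ln] by (simp add: ltop_def)
    have la: "Poly_Mapping.lookup a \<alpha> \<noteq> 0" using ta by (simp add: ltop_def)
    have d0: "d \<noteq> 0" using cl la by (simp add: d_def)
    have dc: "d * cf l = Poly_Mapping.lookup a \<alpha>" using cl by (simp add: d_def)
    have ga: "\<gamma> + M l = \<alpha>" using mle_add_diff[OF l(2)] \<alpha>_def \<gamma>_def by (simp add: add.commute)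
    have tt0: "ltop t (\<gamma> + M l) (d * cf l)"
      unfolding t_def by (rule top_mult[OF top_single[OF d0] gtop[OF ln]]) (simp add: d0 cl)
    have tt: "ltop t \<alpha> (Poly_Mapping.lookup a \<alpha>)" using tt0 ga dc by simp
    have aK: "\<alpha> \<in> Poly_Mapping.keys a" using ta by (rule top_keys)
    have "mle \<gamma> \<alpha>" using ga mle_add_right by metis
    then have "Poly_Mapping.keys \<gamma> \<subseteq> V" using mle_keys aK less.prems unfolding SR_def by blast
    then have sS: "Poly_Mapping.single \<gamma> d \<in> SR V" by (rule SR_single)
    have tS: "t \<in> SR V" unfolding t_def using sS gS[OF ln] by (rule SR_mult)
    have tJ: "t \<in> J j" unfolding t_def using l(1) sS by (rule J_single)
    define a1 where "a1 = a - t"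
    have a1S: "a1 \<in> SR V" unfolding a1_def using less.prems tS by (rule SR_diff)
    have a1z: "Poly_Mapping.lookup a1 \<alpha> = 0" using ta tt by (simp add: a1_def lookup_minus ltop_def)
    have low: "\<forall>\<beta>\<in>Poly_Mapping.keys a1. glt \<beta> \<alpha>"
    proof
      fix \<beta> assume b: "\<beta> \<in> Poly_Mapping.keys a1"
      then have ne: "\<beta> \<noteq> \<alpha>" using a1z by (auto simp: in_keys_iff)
      have "\<beta> \<in> Poly_Mapping.keys a \<or> \<beta> \<in> Poly_Mapping.keys t" using b keys_diff_sub[of a t] unfolding a1_def by blast
      then show "glt \<beta> \<alpha>" using ta tt ne by (auto simp: ltop_def)
    qed
    show ?thesis
    proof (cases "a1 = 0")
      case True
      then have "a = t" by (simp add: a1_def)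
      then show ?thesis using tJ by (intro bexI[of _ 0]) auto
    next
      case False
      have "lead_mon a1 \<in> Poly_Mapping.keys a1" using top_keys[OF lead_exists[OF False]] .
      then have "glt (lead_mon a1) \<alpha>" "Poly_Mapping.keys (lead_mon a1) \<subseteq> V"
        using low a1S by (auto simp: SR_def)
      then have "rank V (lead_mon a1) < rank V (lead_mon a)"
        using rank_less[OF finV] \<alpha>_def by blast
      then obtain a' where a': "a' \<in> SR V" "a1 - a' \<in> J j" "a' = 0 \<or> (\<forall>l<j. \<not> mle (M l) (lead_mon a'))"
        using less.hyps a1S by blast
      have eqa: "a - a' = t + (a1 - a')" by (simp add: a1_def algebra_simps)
      have "a - a' \<in> J j" unfolding eqa by (rule J_add[OF tJ a'(2)])
      then show ?thesis using a' by blast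
    qed
  qed
qed

lemma gb: "j \<le> n \<Longrightarrow> h \<in> J j \<Longrightarrow> h \<noteq> 0 \<Longrightarrow> \<exists>l<j. mle (M l) (lead_mon h)"
proof (induction j arbitrary: h)
  case 0
  then show ?case using J_zero by simp
next
  case (Suc j)
  have jn: "j < n" "j \<le> n" using Suc.prems by auto
  obtain c b where cb: "c \<in> SR V" "b \<in> J j" "h = c * g j + b" using J_Suc[OF Suc.prems(2)] by blast
  obtain a' where a': "a' \<in> SR V" "c - a' \<in> J j" "a' = 0 \<or> (\<forall>l<j. \<not> mle (M l) (lead_mon a'))"
    using reduce[OF jn(2) cb(1)] by blast
  define b' where "b' = b + (c - a') * g j"
  have b'J: "b' \<in> J j" unfolding b'_def by (rule J_add[OF cb(2) J_mult[OF a'(2) gS[OF jn(1)]]])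
  have heq: "h = a' * g j + b'" using cb(3) by (simp add: b'_def algebra_simps)
  show ?case
  proof (cases "a' = 0")
    case True
    then have "h = b'" using heq by simp
    then show ?thesis using Suc.IH[OF jn(2) b'J] Suc.prems(3) by (meson less_SucI)
  next
    case False
    then have nd: "\<forall>l<j. \<not> mle (M l) (lead_mon a')" using a'(3) by blast
    define \<alpha> where "\<alpha> = lead_mon a' + M j"
    have ta: "ltop a' (lead_mon a') (Poly_Mapping.lookup a' (lead_mon a'))" using lead_exists[OF False] .
    have tg: "ltop (g j) (M j) (cf j)" using gtop[OF jn(1)] .
    have nz: "Poly_Mapping.lookup a' (lead_mon a') * cf j \<noteq> 0" using ta tg by (simp add: ltop_def)
    have tag: "ltop (a' * g j) \<alpha> (Poly_Mapping.lookup a' (lead_mon a') * cf j)"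
      unfolding \<alpha>_def by (rule top_mult[OF ta tg nz])
    show ?thesis
    proof (cases "b' = 0")
      case True
      then have "lead_mon h = \<alpha>" using heq top_lead[OF tag] by simp
      then show ?thesis unfolding \<alpha>_def using mle_add_left by auto
    next
      case False
      define \<beta> where "\<beta> = lead_mon b'"
      have tb: "ltop b' \<beta> (Poly_Mapping.lookup b' \<beta>)" using lead_exists[OF False] \<beta>_def by simp
      obtain l where l: "l < j" "mle (M l) \<beta>" using Suc.IH[OF jn(2) b'J False] \<beta>_def by blast
      consider "\<beta> = \<alpha>" | "glt \<beta> \<alpha>" | "glt \<alpha> \<beta>" using glt_total by blast
      then show ?thesis
      proof cases
        case 1
        have "mle (M l) (lead_mon a' + M j)" using l(2) 1 \<alpha>_def by simp
        moreover have "\<forall>v. Poly_Mapping.lookup (M l) v = 0 \<or> Poly_Mapping.lookup (M j) v = 0"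
          using cop[of l j] l(1) jn(1) by simp
        ultimately have "mle (M l) (lead_mon a')" by (rule mle_coprime)
        then show ?thesis using nd l(1) by blast
      next
        case 2
        have "ltop (a' * g j + b') \<alpha> (Poly_Mapping.lookup a' (lead_mon a') * cf j)"
          by (rule top_add_low[OF tag top_below[OF tb 2]])
        then have "lead_mon h = \<alpha>" using heq top_lead by metis
        then show ?thesis unfolding \<alpha>_def using mle_add_left by auto
      next
        case 3
        have "ltop (b' + a' * g j) \<beta> (Poly_Mapping.lookup b' \<beta>)"
          by (rule top_add_low[OF tb top_below[OF tag 3]])
        then have "lead_mon h = \<beta>" using heq top_lead by (metis add.commute)
        then show ?thesis using l by (meson less_SucI)
      qed
    qed
  qed
qed

end


lemma sum_lev:
  fixes m q r :: nat and lev :: "nat \<Rightarrow> nat"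
  assumes rm: "r < m" and lev: "\<And>i. lev i = (if i < m - r then q else Suc q)"
  shows "(\<Sum>i<m. lev i) = q * m + r"
proof -
  have "(\<Sum>i<m. lev i) = (\<Sum>i<m. q + (if i < m - r then 0 else 1))"
    by (rule sum.cong) (auto simp: lev)
  also have "\<dots> = q * m + (\<Sum>i<m. (if i < m - r then 0 else 1))"
    by (simp add: sum.distrib)
  also have "(\<Sum>i<m. (if i < m - r then 0 else 1::nat)) = card ({..<m} \<inter> - {i. i < m - r})"
    by (simp add: sum.If_cases)
  also have "{..<m} \<inter> - {i. i < m - r} = {m - r..<m}" by auto
  also have "card {m - r..<m} = r" using rm by simp
  finally show ?thesis .
qed

lemma key_comb:
  fixes m q r i0 :: nat and p f lev sig :: "nat \<Rightarrow> nat"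
  assumes rm: "r < m"
    and lev: "\<And>i. lev i = (if i < m - r then q else Suc q)"
    and sig: "\<And>i. i < m \<Longrightarrow> sig i = (if i < m - r then m - r - 1 - i else 2 * m - r - 1 - i)"
    and inj: "inj_on p {..<m}"
    and sm: "(\<Sum>i<m. f i) = q * m + r"
    and i0: "i0 < m" and nv: "\<not> (f i0 = lev i0 \<and> p i0 = sig i0)"
  shows "\<exists>i<m. \<not> (f i = lev i \<and> p i = sig i) \<and> var_less (f i, i, p i) (lev i0, i0, sig i0)"
proof (rule ccontr)
  assume "\<not> ?thesis"
  then have H: "\<And>i. i < m \<Longrightarrow> var_less (f i, i, p i) (lev i0, i0, sig i0) \<Longrightarrow> f i = lev i \<and> p i = sig i"
    by blast
  have fq: "q \<le> f i" if "i < m" for i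
  proof (rule ccontr)
    assume "\<not> q \<le> f i"
    then have "f i < lev i0" using lev[of i0] by auto
    then have "var_less (f i, i, p i) (lev i0, i0, sig i0)" by (simp add: var_less_simp)
    then have "f i = lev i" using H that by blast
    then show False using \<open>\<not> q \<le> f i\<close> lev[of i] by (auto split: if_splits)
  qed
  have sumlev: "(\<Sum>i<m. lev i) = q * m + r" using sum_lev[OF rm lev] .
  have flev: "f i = lev i" if ge: "\<And>i. i < m \<Longrightarrow> lev i \<le> f i" and "i < m" for i
    using sum_mono_inv[of lev "{..<m}" f i] ge that sm sumlev by auto
  show False
  proof (cases "i0 < m - r")
    case True
    have L0: "lev i0 = q" "sig i0 = m - r - 1 - i0" using True lev sig[OF i0] by auto
    have ge: "lev i \<le> f i" if "i < m" for i
    proof (cases "i < m - r")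
      case True then show ?thesis using fq[OF that] lev by simp
    next
      case False
      have "f i \<noteq> q"
      proof
        assume "f i = q"
        have "i0 < i" using False \<open>i0 < m - r\<close> by simp
        then have "var_less (f i, i, p i) (lev i0, i0, sig i0)" using \<open>f i = q\<close> L0 by (simp add: var_less_simp)
        then have "f i = lev i" using H that by blast
        then show False using \<open>f i = q\<close> False lev[of i] by simp
      qed
      then show ?thesis using fq[OF that] lev[of i] False by simp
    qed
    have fl: "f i = lev i" if "i < m" for i using flev[OF ge that] .
    then have "p i0 \<noteq> sig i0" using nv i0 by blast
    have pl: "p i0 < sig i0"
    proof (rule ccontr)
      assume "\<not> p i0 < sig i0"
      then have "sig i0 < p i0" using \<open>p i0 \<noteq> sig i0\<close> by simp
      then have "var_less (f i0, i0, p i0) (lev i0, i0, sig i0)" using fl[OF i0] by (simp add: var_less_simp)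
      then show False using H[OF i0] \<open>p i0 \<noteq> sig i0\<close> by blast
    qed
    define i1 where "i1 = m - r - 1 - p i0"
    have i1: "i0 < i1" "i1 < m - r" using pl L0 True by (auto simp: i1_def)
    have "var_less (f i1, i1, p i1) (lev i0, i0, sig i0)"
      using fl[of i1] i1 lev[of i1] L0 by (simp add: var_less_simp)
    then have "p i1 = sig i1" using H[of i1] i1 by auto
    then have "p i1 = p i0" using sig[of i1] i1 pl L0 True by (simp add: i1_def)
    then have "i1 = i0" using inj i1 i0 by (auto dest: inj_onD)
    then show False using i1 by simp
  next
    case False
    have L0: "lev i0 = Suc q" "sig i0 = 2 * m - r - 1 - i0" using False lev sig[OF i0] by auto
    have ge: "lev i \<le> f i" if "i < m" for i
    proof (cases "i < m - r")
      case True then show ?thesis using fq[OF that] lev by simp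
    next
      case False
      have "f i \<noteq> q"
      proof
        assume "f i = q"
        then have "var_less (f i, i, p i) (lev i0, i0, sig i0)" using L0 by (simp add: var_less_simp)
        then have "f i = lev i" using H that by blast
        then show False using \<open>f i = q\<close> False lev[of i] by simp
      qed
      then show ?thesis using fq[OF that] lev[of i] False by simp
    qed
    have fl: "f i = lev i" if "i < m" for i using flev[OF ge that] .
    then have "p i0 \<noteq> sig i0" using nv i0 by blast
    have pl: "p i0 < sig i0"
    proof (rule ccontr)
      assume "\<not> p i0 < sig i0"
      then have "sig i0 < p i0" using \<open>p i0 \<noteq> sig i0\<close> by simp
      then have "var_less (f i0, i0, p i0) (lev i0, i0, sig i0)" using fl[OF i0] by (simp add: var_less_simp)
      then show False using H[OF i0] \<open>p i0 \<noteq> sig i0\<close> by blast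
    qed
    show False
    proof (cases "p i0 < m - r")
      case True
      define i1 where "i1 = m - r - 1 - p i0"
      have i1: "i1 < m - r" "i1 < m" using True by (auto simp: i1_def)
      have "var_less (f i1, i1, p i1) (lev i0, i0, sig i0)"
        using fl[of i1] i1 lev[of i1] L0 by (simp add: var_less_simp)
      then have "p i1 = sig i1" using H[of i1] i1 by auto
      then have "p i1 = p i0" using sig[of i1] i1 True by (simp add: i1_def)
      then have "i1 = i0" using inj i1 i0 by (auto dest: inj_onD)
      then show False using i1 False by simp
    next
      case False2: False
      define i1 where "i1 = 2 * m - r - 1 - p i0"
      have i1: "i0 < i1" "i1 < m" "\<not> i1 < m - r" using pl L0 False2 False i0 rm by (auto simp: i1_def)
      have "var_less (f i1, i1, p i1) (lev i0, i0, sig i0)"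
        using fl[of i1] fl[OF i0] i1 lev[of i1] L0 by (simp add: var_less_simp)
      then have "p i1 = sig i1" using H[of i1] i1 by auto
      moreover have "sig i1 = 2 * m - r - 1 - i1" using sig[of i1] i1 by simp
      moreover have "p i0 < 2 * m - r - 1" using pl L0 by simp
      ultimately have "p i1 = p i0" unfolding i1_def by linarith
      then have "i1 = i0" using inj i1 i0 by (auto dest: inj_onD)
      then show False using i1 by simp
    qed
  qed
qed


section \<open>Squarefree monomials\<close>

lemma lookup_sqfree:
  assumes "finite A"
  shows "Poly_Mapping.lookup (sqfree_mon A) v = (if v \<in> A then 1 else 0)"
proof -
  have "Poly_Mapping.lookup (sqfree_mon A) v = (\<Sum>w\<in>A. if w = v then 1 else 0)"
    unfolding sqfree_mon_def lookup_sum lookup_single when_def by (rule sum.cong) auto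
  also have "\<dots> = (if v \<in> A then 1 else 0)" using assms by (simp add: sum.delta)
  finally show ?thesis .
qed

lemma keys_sqfree: assumes "finite A" shows "Poly_Mapping.keys (sqfree_mon A) = A"
proof (rule Set.set_eqI)
  fix v show "v \<in> Poly_Mapping.keys (sqfree_mon A) \<longleftrightarrow> v \<in> A"
    using assms by (simp add: in_keys_iff lookup_sqfree)
qed

lemma sqfree_inj:
  assumes "finite A" "finite B" "sqfree_mon A = sqfree_mon B" shows "A = B"
proof -
  have "A = Poly_Mapping.keys (sqfree_mon A)" using keys_sqfree[OF assms(1)] by simp
  also have "\<dots> = Poly_Mapping.keys (sqfree_mon B)" using assms(3) by (rule arg_cong)
  also have "\<dots> = B" using keys_sqfree[OF assms(2)] by simp
  finally show ?thesis .
qed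

lemma mle_sqfree:
  assumes "finite A" "finite B"
  shows "mle (sqfree_mon A) (sqfree_mon B) \<longleftrightarrow> A \<subseteq> B"
proof
  assume "mle (sqfree_mon A) (sqfree_mon B)"
  from mle_keys[OF this] show "A \<subseteq> B" using keys_sqfree[OF assms(1)] keys_sqfree[OF assms(2)] by simp
next
  assume AB: "A \<subseteq> B"
  show "mle (sqfree_mon A) (sqfree_mon B)" unfolding mle_def
  proof
    fix v show "Poly_Mapping.lookup (sqfree_mon A) v \<le> Poly_Mapping.lookup (sqfree_mon B) v"
    proof (cases "v \<in> A")
      case True then have "v \<in> B" using AB by blast
      then show ?thesis using True assms by (simp add: lookup_sqfree)
    next
      case False then show ?thesis using assms by (simp add: lookup_sqfree)
    qed
  qed
qed

lemma mdeg_sqfree: "finite A \<Longrightarrow> mdeg (sqfree_mon A) = card A"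
  unfolding mdeg_def by (simp add: keys_sqfree lookup_sqfree)

lemma sqfree_union:
  assumes "finite A" "finite B" "A \<inter> B = {}"
  shows "sqfree_mon (A \<union> B) = sqfree_mon A + sqfree_mon B"
  unfolding sqfree_mon_def using assms by (rule sum.union_disjoint)

lemma glt_sqfree:
  assumes "finite A" "finite B" "card A = card B" "v \<in> B" "v \<notin> A"
    and below: "\<forall>w. var_less w v \<longrightarrow> (w \<in> A \<longleftrightarrow> w \<in> B)"
  shows "glt (sqfree_mon B) (sqfree_mon A)"
proof -
  have "mdeg (sqfree_mon B) = mdeg (sqfree_mon A)" using assms by (simp add: mdeg_sqfree)
  moreover have "Poly_Mapping.lookup (sqfree_mon A) v < Poly_Mapping.lookup (sqfree_mon B) v"
    using assms by (simp add: lookup_sqfree)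
  moreover have "\<forall>w. var_less w v \<longrightarrow> Poly_Mapping.lookup (sqfree_mon A) w = Poly_Mapping.lookup (sqfree_mon B) w"
  proof (intro allI impI)
    fix w assume "var_less w v"
    then have "w \<in> A \<longleftrightarrow> w \<in> B" using below by blast
    then show "Poly_Mapping.lookup (sqfree_mon A) w = Poly_Mapping.lookup (sqfree_mon B) w"
      using assms(1,2) by (simp add: lookup_sqfree)
  qed
  ultimately show ?thesis unfolding glt_def by blast
qed

lemma glt_from_key:
  assumes fin: "finite A" "finite B" and c: "card A = card B" and ne: "A \<noteq> B"
    and key: "\<forall>v\<in>A - B. \<exists>w\<in>B - A. var_less w v"
  shows "glt (sqfree_mon B) (sqfree_mon A)"
proof -
  let ?D = "(A - B) \<union> (B - A)"
  have fD: "finite ?D" using fin by simp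
  have nD: "?D \<noteq> {}" using ne by blast
  obtain v where v: "v \<in> ?D" "\<forall>y\<in>?D. y \<noteq> v \<longrightarrow> var_less v y"
    using finite_has_min[OF fD nD, of var_less] var_less_trans var_less_total by blast
  have vB: "v \<in> B - A"
  proof (rule ccontr)
    assume "v \<notin> B - A"
    then have "v \<in> A - B" using v(1) by blast
    then obtain w where w: "w \<in> B - A" "var_less w v" using key by blast
    then have "w \<noteq> v" using var_less_irrefl by blast
    then have "var_less v w" using v(2) w(1) by blast
    then show False using w(2) var_less_asym by blast
  qed
  have below: "\<forall>w. var_less w v \<longrightarrow> (w \<in> A \<longleftrightarrow> w \<in> B)"
  proof (intro allI impI)
    fix w assume w: "var_less w v"
    show "w \<in> A \<longleftrightarrow> w \<in> B"
    proof (rule ccontr)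
      assume "\<not> (w \<in> A \<longleftrightarrow> w \<in> B)"
      then have "w \<in> ?D" by blast
      moreover have "w \<noteq> v" using w var_less_irrefl by blast
      ultimately have "var_less v w" using v(2) by blast
      then show False using w var_less_asym by blast
    qed
  qed
  show ?thesis using glt_sqfree[OF fin c _ _ below] vB by blast
qed


definition TS :: "nat \<Rightarrow> (nat \<Rightarrow> nat) \<Rightarrow> (nat \<Rightarrow> nat) \<Rightarrow> var set" where
  "TS m p f = (\<lambda>i. (f i, i, p i)) ` {..<m}"

definition Fs :: "nat \<Rightarrow> nat \<Rightarrow> nat \<Rightarrow> (nat \<Rightarrow> nat) set" where
  "Fs m k l = {f \<in> PiE {..<m} (\<lambda>_. {..<k}). sum f {..<m} = l}"

lemma finite_TS[simp]: "finite (TS m p f)"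
  by (simp add: TS_def)

lemma inj_row: "inj_on (\<lambda>i. (f i, i, p i)) A"
  by (rule inj_onI) auto

lemma card_TS: "card (TS m p f) = m"
  unfolding TS_def by (simp add: card_image[OF inj_row])

lemma prod_monom_gen:
  "finite I \<Longrightarrow> (\<Prod>i\<in>I. monom (c i) (e i)) = monom (\<Prod>i\<in>I. c i) (\<Sum>i\<in>I. e i)"
  by (induction I rule: finite_induct) (auto simp: mult_monom)

lemma prod_single_gen:
  "finite I \<Longrightarrow> (\<Prod>i\<in>I. Poly_Mapping.single (a i) (1::'b::comm_ring_1)) = Poly_Mapping.single (\<Sum>i\<in>I. a i) 1"
  by (induction I rule: finite_induct) (auto simp: mult_single)

lemma sqfree_TS: "sqfree_mon (TS m p f) = (\<Sum>i<m. Poly_Mapping.single (f i, i, p i) 1)"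
  unfolding sqfree_mon_def TS_def by (simp add: sum.reindex[OF inj_row])

lemma prod_Var: "(\<Prod>i<m. (Var (f i, i, p i) :: 'a::comm_ring_1 mpoly)) = Poly_Mapping.single (sqfree_mon (TS m p f)) 1"
  unfolding Var_def by (simp add: prod_single_gen sqfree_TS)

lemma det_Xt:
  "det (Xt m k :: 'a::comm_ring_1 mpoly poly mat) = (\<Sum>p\<in>{p. p permutes {..<m}}. signof p * (\<Prod>i<m. xt k i (p i)))"
proof -
  have "det (Xt m k :: 'a mpoly poly mat) = (\<Sum>p\<in>{p. p permutes {0..<m}}. signof p * (\<Prod>i=0..<m. Xt m k $$ (i, p i)))"
    by (rule det_def') (simp add: Xt_def)
  also have "\<dots> = (\<Sum>p\<in>{p. p permutes {..<m}}. signof p * (\<Prod>i<m. xt k i (p i)))"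
  proof (rule sum.cong)
    show "{p. p permutes {0..<m}} = {p. p permutes {..<m}}" by (simp add: atLeast0LessThan)
  next
    fix p assume "p \<in> {p. p permutes {..<m}}"
    then have pp: "p permutes {..<m}" by simp
    have "(\<Prod>i=0..<m. Xt m k $$ (i, p i)) = (\<Prod>i<m. (xt k i (p i) :: 'a mpoly poly))"
    proof (rule prod.cong)
      show "{0..<m} = {..<m}" by (simp add: atLeast0LessThan)
    next
      fix i assume "i \<in> {..<m}"
      then have "i < m" "p i < m" using permutes_in_image[OF pp] by auto
      then show "Xt m k $$ (i, p i) = xt k i (p i)" by (simp add: Xt_def)
    qed
    then show "signof p * (\<Prod>i=0..<m. Xt m k $$ (i, p i)) = signof p * (\<Prod>i<m. (xt k i (p i) :: 'a mpoly poly))" by (rule arg_cong)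
  qed
  finally show ?thesis .
qed

lemma prod_xt:
  "(\<Prod>i<m. (xt k i (p i) :: 'a::comm_ring_1 mpoly poly)) =
     (\<Sum>f\<in>PiE {..<m} (\<lambda>_. {..<k}). monom (Poly_Mapping.single (sqfree_mon (TS m p f)) 1) (\<Sum>i<m. f i))"
proof -
  have "(\<Prod>i<m. (xt k i (p i) :: 'a mpoly poly)) = (\<Prod>i<m. \<Sum>l<k. monom (Var (l, i, p i)) l)"
    by (simp add: xt_def)
  also have "\<dots> = (\<Sum>f\<in>PiE {..<m} (\<lambda>_. {..<k}). \<Prod>i<m. monom (Var (f i, i, p i)) (f i))"
    by (rule prod_sum_PiE) auto
  also have "\<dots> = (\<Sum>f\<in>PiE {..<m} (\<lambda>_. {..<k}). monom (Poly_Mapping.single (sqfree_mon (TS m p f)) 1) (\<Sum>i<m. f i))"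
    by (rule sum.cong) (simp_all add: prod_monom_gen prod_Var)
  finally show ?thesis .
qed

lemma coeff_det:
  "coeff (det (Xt m k :: 'a::comm_ring_1 mpoly poly mat)) l =
    (\<Sum>p\<in>{p. p permutes {..<m}}. \<Sum>f\<in>Fs m k l. Poly_Mapping.single (sqfree_mon (TS m p f)) (of_int (sign p)))"
proof -
  have "coeff (det (Xt m k :: 'a mpoly poly mat)) l =
     (\<Sum>p\<in>{p. p permutes {..<m}}. coeff (signof p * (\<Prod>i<m. xt k i (p i))) l)"
    by (simp add: det_Xt coeff_sum)
  also have "\<dots> = (\<Sum>p\<in>{p. p permutes {..<m}}. \<Sum>f\<in>Fs m k l. Poly_Mapping.single (sqfree_mon (TS m p f)) (of_int (sign p)))"
  proof (rule sum.cong[OF refl])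
    fix p
    have "coeff (signof p * (\<Prod>i<m. (xt k i (p i) :: 'a mpoly poly))) l
        = of_int (sign p) * coeff (\<Prod>i<m. (xt k i (p i) :: 'a mpoly poly)) l"
      by (simp add: of_int_poly)
    also have "coeff (\<Prod>i<m. (xt k i (p i) :: 'a mpoly poly)) l
        = (\<Sum>f\<in>PiE {..<m} (\<lambda>_. {..<k}). if (\<Sum>i<m. f i) = l then Poly_Mapping.single (sqfree_mon (TS m p f)) 1 else 0)"
      by (simp add: prod_xt coeff_sum)
    also have "\<dots> = (\<Sum>f\<in>Fs m k l. Poly_Mapping.single (sqfree_mon (TS m p f)) 1)"
      unfolding Fs_def by (rule sum.inter_filter[symmetric]) (simp add: finite_PiE)
    also have "of_int (sign p) * \<dots> = (\<Sum>f\<in>Fs m k l. Poly_Mapping.single (sqfree_mon (TS m p f)) (of_int (sign p)))"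
    proof -
      have "of_int (sign p) * Poly_Mapping.single \<alpha> (1::'a) = Poly_Mapping.single \<alpha> (of_int (sign p))" for \<alpha> :: monomial
      proof -
        have "of_int (sign p) * Poly_Mapping.single \<alpha> (1::'a) = Poly_Mapping.single 0 (of_int (sign p)) * Poly_Mapping.single \<alpha> 1"
          by (simp only: single_of_int)
        also have "\<dots> = Poly_Mapping.single \<alpha> (of_int (sign p))"
          by (simp only: mult_single add.left_neutral mult.right_neutral)
        finally show ?thesis .
      qed
      then show ?thesis by (simp add: sum_distrib_left)
    qed
    finally show "coeff (signof p * (\<Prod>i<m. (xt k i (p i) :: 'a mpoly poly))) l =
        (\<Sum>f\<in>Fs m k l. Poly_Mapping.single (sqfree_mon (TS m p f)) (of_int (sign p)))" .
  qed
  finally show ?thesis .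
qed


definition levf :: "nat \<Rightarrow> nat \<Rightarrow> nat \<Rightarrow> nat" where
  "levf m l i = (if i < m - l mod m then l div m else Suc (l div m))"

definition sigf :: "nat \<Rightarrow> nat \<Rightarrow> nat \<Rightarrow> nat" where
  "sigf m l i = (if i < m - l mod m then m - l mod m - 1 - i else if i < m then 2 * m - l mod m - 1 - i else i)"

definition lamf :: "nat \<Rightarrow> nat \<Rightarrow> nat \<Rightarrow> nat" where
  "lamf m l = restrict (levf m l) {..<m}"

definition MS :: "nat \<Rightarrow> nat \<Rightarrow> var set" where
  "MS m l = TS m (sigf m l) (levf m l)"

lemma sigf_lt: "0 < m \<Longrightarrow> i < m \<Longrightarrow> sigf m l i < m"
  using mod_less_divisor[of m l] by (auto simp: sigf_def)

lemma sigf_inv: assumes "0 < m" "i < m" shows "sigf m l (sigf m l i) = i"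
proof -
  have r: "l mod m < m" using assms(1) by simp
  show ?thesis
  proof (cases "i < m - l mod m")
    case True
    then have "sigf m l i = m - l mod m - 1 - i" by (simp add: sigf_def)
    moreover have "m - l mod m - 1 - i < m - l mod m" using True by simp
    ultimately show ?thesis using True by (simp add: sigf_def)
  next
    case False
    then have s: "sigf m l i = 2 * m - l mod m - 1 - i" using assms by (simp add: sigf_def)
    have "\<not> 2 * m - l mod m - 1 - i < m - l mod m" "2 * m - l mod m - 1 - i < m"
      using False assms r by auto
    moreover have "2 * m - l mod m - 1 - (2 * m - l mod m - 1 - i) = i" using False assms r by arith
    ultimately show ?thesis using s assms by (simp add: sigf_def)
  qed
qed

lemma sigf_permutes: assumes "0 < m" shows "sigf m l permutes {..<m}"
proof (rule bij_imp_permutes)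
  show "bij_betw (sigf m l) {..<m} {..<m}"
  proof (rule bij_betw_imageI)
    show "inj_on (sigf m l) {..<m}"
    proof (rule inj_onI)
      fix x y assume "x \<in> {..<m}" "y \<in> {..<m}" "sigf m l x = sigf m l y"
      then show "x = y" using sigf_inv[OF assms] by (metis lessThan_iff)
    qed
    show "sigf m l ` {..<m} = {..<m}"
    proof
      show "sigf m l ` {..<m} \<subseteq> {..<m}" using sigf_lt[OF assms] by auto
      show "{..<m} \<subseteq> sigf m l ` {..<m}"
      proof
        fix x assume x: "x \<in> {..<m}"
        then have "x = sigf m l (sigf m l x)" using sigf_inv[OF assms] by simp
        moreover have "sigf m l x \<in> {..<m}" using x sigf_lt[OF assms] by simp
        ultimately show "x \<in> sigf m l ` {..<m}" by blast
      qed
    qed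
  qed
next
  fix x assume "x \<notin> {..<m}" then show "sigf m l x = x" by (simp add: sigf_def)
qed

lemma levf_lt: assumes "0 < m" "l < k" "i < m" shows "levf m l i < k"
proof -
  have e: "l div m * m + l mod m = l" by simp
  show ?thesis
  proof (cases "i < m - l mod m")
    case True
    have "l div m \<le> l" by (rule div_le_dividend)
    then have "l div m < k" using assms(2) by linarith
    then show ?thesis using True by (simp add: levf_def)
  next
    case False
    then have "0 < l mod m" using assms(3) by simp
    moreover have "l div m \<le> l div m * m" using assms(1) by simp
    ultimately have "Suc (l div m) \<le> l" using e by linarith
    then show ?thesis using False assms by (simp add: levf_def)
  qed
qed

lemma sum_levf: assumes "0 < m" shows "(\<Sum>i<m. levf m l i) = l"
proof -
  have "(\<Sum>i<m. levf m l i) = l div m * m + l mod m"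
    by (rule sum_lev) (use assms in \<open>simp_all add: levf_def\<close>)
  then show ?thesis by simp
qed

lemma lamf_Fs: assumes "0 < m" "l < k" shows "lamf m l \<in> Fs m k l"
proof -
  have "lamf m l \<in> PiE {..<m} (\<lambda>_. {..<k})"
    unfolding lamf_def using levf_lt[OF assms] by (auto simp: PiE_def extensional_def)
  moreover have "sum (lamf m l) {..<m} = l"
    using sum_levf[OF assms(1), of l] by (simp add: lamf_def)
  ultimately show ?thesis by (simp add: Fs_def)
qed

lemma TS_cong: "(\<And>i. i < m \<Longrightarrow> p i = p' i \<and> f i = f' i) \<Longrightarrow> TS m p f = TS m p' f'"
  unfolding TS_def by (rule image_cong) auto

lemma MS_lamf: "TS m (sigf m l) (lamf m l) = MS m l"
  unfolding MS_def by (rule TS_cong) (simp add: lamf_def)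

lemma TS_row: "i < m \<Longrightarrow> (a, i, c) \<in> TS m p f \<longleftrightarrow> a = f i \<and> c = p i"
  unfolding TS_def by auto

lemma TS_eq_MS:
  assumes m: "0 < m" and p: "p permutes {..<m}" and f: "f \<in> Fs m k l"
    and eq: "TS m p f = MS m l"
  shows "p = sigf m l \<and> f = lamf m l"
proof -
  have row: "f i = levf m l i \<and> p i = sigf m l i" if "i < m" for i
  proof -
    have "(f i, i, p i) \<in> TS m p f" using that by (simp add: TS_row)
    then have "(f i, i, p i) \<in> TS m (sigf m l) (levf m l)" using eq by (simp add: MS_def)
    then show ?thesis using that by (simp add: TS_row)
  qed
  have "p = sigf m l"
  proof
    fix i show "p i = sigf m l i"
    proof (cases "i < m")
      case True then show ?thesis using row by simp
    next
      case False
      then have "p i = i" using p by (simp add: permutes_def)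
      then show ?thesis using False by (simp add: sigf_def)
    qed
  qed
  moreover have "f = lamf m l"
  proof
    fix i show "f i = lamf m l i"
    proof (cases "i < m")
      case True then show ?thesis using row by (simp add: lamf_def)
    next
      case False
      then have "f i = undefined" using f by (auto simp: Fs_def PiE_def extensional_def)
      then show ?thesis using False by (simp add: lamf_def)
    qed
  qed
  ultimately show ?thesis by simp
qed

lemma TS_key:
  assumes m: "0 < m" and p: "p permutes {..<m}" and f: "f \<in> Fs m k l"
  shows "\<forall>v\<in>MS m l - TS m p f. \<exists>w\<in>TS m p f - MS m l. var_less w v"
proof
  fix v assume v: "v \<in> MS m l - TS m p f"
  then obtain i0 where i0: "i0 < m" "v = (levf m l i0, i0, sigf m l i0)"
    unfolding MS_def TS_def by auto
  have nv: "\<not> (f i0 = levf m l i0 \<and> p i0 = sigf m l i0)"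
    using v i0 by (auto simp: TS_row)
  have inj: "inj_on p {..<m}" using p permutes_inj_on by blast
  have sm: "(\<Sum>i<m. f i) = l div m * m + l mod m" using f by (simp add: Fs_def)
  have rm: "l mod m < m" using m by simp
  have levE: "\<And>i. levf m l i = (if i < m - l mod m then l div m else Suc (l div m))"
    by (simp add: levf_def)
  have sigE: "\<And>i. i < m \<Longrightarrow> sigf m l i = (if i < m - l mod m then m - l mod m - 1 - i else 2 * m - l mod m - 1 - i)"
    by (simp add: sigf_def)
  obtain i where i: "i < m" "\<not> (f i = levf m l i \<and> p i = sigf m l i)"
      "var_less (f i, i, p i) (levf m l i0, i0, sigf m l i0)"
    using key_comb[OF rm levE sigE inj sm i0(1) nv] by blast
  have "(f i, i, p i) \<in> TS m p f" using i(1) by (simp add: TS_row)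
  moreover have "(f i, i, p i) \<notin> MS m l" using i(1,2) by (simp add: MS_def TS_row)
  ultimately show "\<exists>w\<in>TS m p f - MS m l. var_less w v" using i(3) i0(2) by blast
qed

lemma TS_glt:
  assumes m: "0 < m" and p: "p permutes {..<m}" and f: "f \<in> Fs m k l" and ne: "TS m p f \<noteq> MS m l"
  shows "glt (sqfree_mon (TS m p f)) (sqfree_mon (MS m l))"
  by (rule glt_from_key) (use assms TS_key[OF m p f] in \<open>auto simp: MS_def card_TS\<close>)


definition gg :: "nat \<Rightarrow> nat \<Rightarrow> nat \<Rightarrow> 'a::comm_ring_1 mpoly" where
  "gg m k l = coeff (det (Xt m k)) l"

lemma finite_Fs: "finite (Fs m k l)"
proof -
  have "Fs m k l \<subseteq> PiE {..<m} (\<lambda>_. {..<k})" by (auto simp: Fs_def)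
  then show ?thesis by (rule finite_subset) (simp add: finite_PiE)
qed

lemma finite_perms: "finite {p. p permutes {..<(m::nat)}}"
  using finite_permutations[of "{..<m}"] by simp

lemma finite_vars: "finite (vars m k)"
proof -
  have "vars m k = {..<k} \<times> {..<m} \<times> {..<m}" by (auto simp: vars_def)
  then show ?thesis by simp
qed

lemma card_vars: "card (vars m k) = k * (m * m)"
proof -
  have "vars m k = {..<k} \<times> {..<m} \<times> {..<m}" by (auto simp: vars_def)
  then show ?thesis by (simp add: card_cartesian_product)
qed

lemma TS_sub_vars:
  assumes p: "p permutes {..<m}" and f: "f \<in> Fs m k l"
  shows "TS m p f \<subseteq> vars m k"
proof
  fix v assume "v \<in> TS m p f"
  then obtain i where i: "i < m" "v = (f i, i, p i)" by (auto simp: TS_def)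
  have "f i < k" using f i(1) by (auto simp: Fs_def PiE_def Pi_def)
  moreover have "p i < m" using permutes_in_image[OF p] i(1) by simp
  ultimately show "v \<in> vars m k" using i by (simp add: vars_def)
qed

lemma MS_sub_vars: assumes "0 < m" "l < k" shows "MS m l \<subseteq> vars m k"
  using TS_sub_vars[OF sigf_permutes[OF assms(1), of l] lamf_Fs[OF assms]] MS_lamf[of m l] by simp

lemma card_MS: "card (MS m l) = m"
  by (simp add: MS_def card_TS)

lemma gg_SR: "gg m k l \<in> SR (vars m k)"
  unfolding gg_def coeff_det
proof (intro SR_sum)
  fix p f assume "p \<in> {p. p permutes {..<m}}" "f \<in> Fs m k l"
  then have "TS m p f \<subseteq> vars m k" using TS_sub_vars by blast
  then show "Poly_Mapping.single (sqfree_mon (TS m p f)) (of_int (sign p)) \<in> SR (vars m k)"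
    by (intro SR_single) (simp add: keys_sqfree)
qed

lemma lookup_gg:
  "Poly_Mapping.lookup (gg m k l) \<alpha> =
    (\<Sum>p\<in>{p. p permutes {..<m}}. \<Sum>f\<in>Fs m k l. if sqfree_mon (TS m p f) = \<alpha> then of_int (sign p) else 0)"
  unfolding gg_def coeff_det lookup_sum lookup_single when_def by simp

lemma keys_gg:
  assumes "\<alpha> \<in> Poly_Mapping.keys (gg m k l :: 'a::comm_ring_1 mpoly)"
  shows "\<exists>p f. p permutes {..<m} \<and> f \<in> Fs m k l \<and> \<alpha> = sqfree_mon (TS m p f)"
proof (rule ccontr)
  assume "\<not> ?thesis"
  then have "Poly_Mapping.lookup (gg m k l :: 'a mpoly) \<alpha> = 0"
    unfolding lookup_gg by (intro sum.neutral ballI) auto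
  then show False using assms by (simp add: in_keys_iff)
qed

lemma gg_top:
  assumes m: "0 < m" and l: "l < k"
  shows "ltop (gg m k l :: 'a::field mpoly) (sqfree_mon (MS m l)) (of_int (sign (sigf m l)))"
proof -
  let ?P = "{p. p permutes {..<m}}"
  let ?s = "sigf m l" and ?t = "lamf m l"
  have sP: "?s \<in> ?P" using sigf_permutes[OF m] by simp
  have tF: "?t \<in> Fs m k l" using lamf_Fs[OF m l] .
  have eqv: "sqfree_mon (TS m p f) = sqfree_mon (MS m l) \<longleftrightarrow> p = ?s \<and> f = ?t"
    if "p \<in> ?P" "f \<in> Fs m k l" for p f
  proof
    assume "sqfree_mon (TS m p f) = sqfree_mon (MS m l)"
    then have "TS m p f = MS m l" by (rule sqfree_inj[rotated 2]) (simp_all add: MS_def)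
    then show "p = ?s \<and> f = ?t" using TS_eq_MS[OF m] that by blast
  next
    assume "p = ?s \<and> f = ?t"
    then show "sqfree_mon (TS m p f) = sqfree_mon (MS m l)" using MS_lamf by simp
  qed
  have "Poly_Mapping.lookup (gg m k l :: 'a mpoly) (sqfree_mon (MS m l)) =
      (\<Sum>p\<in>?P. \<Sum>f\<in>Fs m k l. if p = ?s \<and> f = ?t then (of_int (sign p) :: 'a) else 0)"
    unfolding lookup_gg by (intro sum.cong refl) (simp add: eqv)
  also have "\<dots> = (\<Sum>p\<in>?P. if p = ?s then (\<Sum>f\<in>Fs m k l. if f = ?t then (of_int (sign p) :: 'a) else 0) else 0)"
    by (intro sum.cong refl) auto
  also have "\<dots> = (\<Sum>p\<in>?P. if p = ?s then (of_int (sign p) :: 'a) else 0)"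
    using tF finite_Fs by (intro sum.cong refl) (simp add: sum.delta)
  also have "\<dots> = of_int (sign ?s)"
    using sum.delta[OF finite_perms, of ?s "\<lambda>p. (of_int (sign p) :: 'a)"] sP by simp
  finally have lk: "Poly_Mapping.lookup (gg m k l :: 'a mpoly) (sqfree_mon (MS m l)) = of_int (sign ?s)" .
  have nz: "(of_int (sign ?s) :: 'a) \<noteq> 0"
    by (cases ?s rule: sign_cases) simp_all
  have low: "\<forall>\<beta>\<in>Poly_Mapping.keys (gg m k l :: 'a mpoly). \<beta> \<noteq> sqfree_mon (MS m l) \<longrightarrow> glt \<beta> (sqfree_mon (MS m l))"
  proof (intro ballI impI)
    fix \<beta> assume b: "\<beta> \<in> Poly_Mapping.keys (gg m k l :: 'a mpoly)" and ne: "\<beta> \<noteq> sqfree_mon (MS m l)"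
    obtain p f where pf: "p permutes {..<m}" "f \<in> Fs m k l" "\<beta> = sqfree_mon (TS m p f)"
      using keys_gg[OF b] by blast
    have "TS m p f \<noteq> MS m l" using ne pf(3) by auto
    then show "glt \<beta> (sqfree_mon (MS m l))" using TS_glt[OF m pf(1,2)] pf(3) by simp
  qed
  show ?thesis using lk nz low by (simp add: ltop_def)
qed

lemma MS_disj:
  assumes m: "0 < m" and ne: "l \<noteq> l'"
  shows "MS m l \<inter> MS m l' = {}"
proof (rule ccontr)
  assume "MS m l \<inter> MS m l' \<noteq> {}"
  then obtain a i c where v: "(a, i, c) \<in> MS m l" "(a, i, c) \<in> MS m l'" by auto
  have i: "i < m" using v(1) by (auto simp: MS_def TS_def)
  have e1: "a = levf m l i" "c = sigf m l i" using v(1) i by (auto simp: MS_def TS_row)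
  have e2: "a = levf m l' i" "c = sigf m l' i" using v(2) i by (auto simp: MS_def TS_row)
  define q where "q = l div m"
  define r where "r = l mod m"
  define q' where "q' = l' div m"
  define r' where "r' = l' mod m"
  have r: "r < m" "r' < m" using m by (auto simp: r_def r'_def)
  have L: "l = q * m + r" "l' = q' * m + r'" by (simp_all add: q_def r_def q'_def r'_def)
  have a1: "a = (if i < m - r then q else Suc q)" using e1 by (simp add: levf_def q_def r_def)
  have a2: "a = (if i < m - r' then q' else Suc q')" using e2 by (simp add: levf_def q'_def r'_def)
  have c1: "c = (if i < m - r then m - r - 1 - i else 2 * m - r - 1 - i)" using e1 i by (simp add: sigf_def r_def)
  have c2: "c = (if i < m - r' then m - r' - 1 - i else 2 * m - r' - 1 - i)" using e2 i by (simp add: sigf_def r'_def)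
  have "q = q' \<and> r = r'"
  proof (cases "i < m - r"; cases "i < m - r'")
    assume "i < m - r" "i < m - r'"
    then show ?thesis using a1 a2 c1 c2 r by auto
  next
    assume "\<not> i < m - r" "\<not> i < m - r'"
    then show ?thesis using a1 a2 c1 c2 r i by auto
  next
    assume "i < m - r" "\<not> i < m - r'"
    then have "c = m - r - 1 - i" "c = 2 * m - r' - 1 - i" using c1 c2 by auto
    then show ?thesis using r i \<open>i < m - r\<close> by arith
  next
    assume "\<not> i < m - r" "i < m - r'"
    then have "c = 2 * m - r - 1 - i" "c = m - r' - 1 - i" using c1 c2 by auto
    then show ?thesis using r i \<open>i < m - r'\<close> by arith
  qed
  then have "l = l'" using L by simp
  then show False using ne by simp
qed


lemma gbl_inst:
  assumes m: "0 < m"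
  shows "gbl (vars m k) k (gg m k :: nat \<Rightarrow> 'a::field mpoly) (\<lambda>l. sqfree_mon (MS m l)) (\<lambda>l. of_int (sign (sigf m l)))"
proof
  show "finite (vars m k)" by (rule finite_vars)
next
  fix l assume "l < k" then show "(gg m k l :: 'a mpoly) \<in> SR (vars m k)" using gg_SR by blast
next
  fix l assume "l < k" then show "ltop (gg m k l :: 'a mpoly) (sqfree_mon (MS m l)) (of_int (sign (sigf m l)))"
    using gg_top[OF m] by blast
next
  fix l l' assume "l < k" "l' < k" "l \<noteq> l'"
  then have d: "MS m l \<inter> MS m l' = {}" using MS_disj[OF m] by blast
  show "\<forall>v. Poly_Mapping.lookup (sqfree_mon (MS m l)) v = 0 \<or> Poly_Mapping.lookup (sqfree_mon (MS m l')) v = 0"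
  proof
    fix v show "Poly_Mapping.lookup (sqfree_mon (MS m l)) v = 0 \<or> Poly_Mapping.lookup (sqfree_mon (MS m l')) v = 0"
      using d by (simp add: lookup_sqfree MS_def) blast
  qed
qed

lemma lead_gg: "0 < m \<Longrightarrow> l < k \<Longrightarrow> lead_mon (gg m k l :: 'a::field mpoly) = sqfree_mon (MS m l)"
  using top_lead[OF gg_top] by blast

lemma inj_gg:
  assumes m: "0 < m"
  shows "inj_on (gg m k :: nat \<Rightarrow> 'a::field mpoly) {..<k}"
proof (rule inj_onI)
  fix l l' assume l: "l \<in> {..<k}" "l' \<in> {..<k}" and e: "(gg m k l :: 'a mpoly) = gg m k l'"
  show "l = l'"
  proof (rule ccontr)
    assume ne: "l \<noteq> l'"
    have "sqfree_mon (MS m l) = sqfree_mon (MS m l')"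
      using lead_gg[OF m, of l k] lead_gg[OF m, of l' k] l e by (metis lessThan_iff)
    then have "MS m l = MS m l'" by (rule sqfree_inj[rotated 2]) (simp_all add: MS_def)
    then have "MS m l = {}" using MS_disj[OF m ne] by simp
    then show False using card_MS[of m l] m by simp
  qed
qed

lemma I_det_J:
  assumes m: "0 < m" and p: "p \<in> (I_det m k :: 'a::field mpoly set)"
  shows "p \<in> gbl.J (vars m k) (gg m k) k"
proof -
  interpret gbl "vars m k" k "gg m k :: nat \<Rightarrow> 'a mpoly" "\<lambda>l. sqfree_mon (MS m l)" "\<lambda>l. of_int (sign (sigf m l))"
    by (rule gbl_inst[OF m])
  obtain H c where H: "finite H" "H \<subseteq> det_gens m k" "\<forall>g\<in>H. c g \<in> S_ring m k" "p = (\<Sum>g\<in>H. c g * g)"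
  proof -
    have "\<exists>H c. finite H \<and> H \<subseteq> det_gens m k \<and> (\<forall>g\<in>H. c g \<in> S_ring m k) \<and> p = (\<Sum>g\<in>H. c g * g)"
      using p unfolding I_det_def ideal_gen_def by (rule CollectD)
    then show ?thesis using that by blast
  qed
  have dg: "det_gens m k = (gg m k :: nat \<Rightarrow> 'a mpoly) ` {..<k}"
    unfolding det_gens_def gg_def image_def by blast
  define L where "L = {l \<in> {..<k}. (gg m k l :: 'a mpoly) \<in> H}"
  have HL: "H = (gg m k :: nat \<Rightarrow> 'a mpoly) ` L"
  proof
    show "H \<subseteq> gg m k ` L"
    proof
      fix h assume "h \<in> H"
      then have "h \<in> gg m k ` {..<k}" using H(2) dg by blast
      then obtain l where "l \<in> {..<k}" "h = gg m k l" by blast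
      then show "h \<in> gg m k ` L" using \<open>h \<in> H\<close> unfolding L_def by blast
    qed
    show "gg m k ` L \<subseteq> H" unfolding L_def by blast
  qed
  have injL: "inj_on (gg m k :: nat \<Rightarrow> 'a mpoly) L"
  proof -
    have "L \<subseteq> {..<k}" unfolding L_def by blast
    then show ?thesis by (rule inj_on_subset[OF inj_gg[OF m]])
  qed
  have "p = (\<Sum>g\<in>gg m k ` L. c g * g)" using H(4) by (simp only: HL)
  also have "\<dots> = (\<Sum>l\<in>L. c (gg m k l) * gg m k l)"
    by (simp only: sum.reindex[OF injL] comp_def)
  also have "\<dots> = (\<Sum>l<k. (if l \<in> L then c (gg m k l) else 0) * gg m k l)"
  proof -
    have "(\<Sum>l<k. (if l \<in> L then c (gg m k l) else 0) * (gg m k l :: 'a mpoly))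
        = (\<Sum>l<k. if l \<in> L then c (gg m k l) * gg m k l else 0)"
      by (rule sum.cong) auto
    also have "\<dots> = (\<Sum>l\<in>{..<k} \<inter> L. c (gg m k l) * gg m k l)"
      by (rule sum.inter_restrict[symmetric]) simp
    also have "{..<k} \<inter> L = L" unfolding L_def by auto
    finally show ?thesis by simp
  qed
  finally have pe: "p = (\<Sum>l<k. (if l \<in> L then c (gg m k l) else 0) * gg m k l)" .
  have "\<forall>l<k. (if l \<in> L then c (gg m k l) else 0) \<in> SR (vars m k)"
  proof (intro allI impI)
    fix l assume "l < k"
    show "(if l \<in> L then c (gg m k l) else 0) \<in> SR (vars m k)"
    proof (cases "l \<in> L")
      case True
      then have "gg m k l \<in> H" unfolding L_def by blast
      then have "c (gg m k l) \<in> S_ring m k" using H(3) by blast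
      then show ?thesis using True by (simp add: S_ring_SR)
    next
      case False then show ?thesis by simp
    qed
  qed
  then show ?thesis using pe by (rule J_intro)
qed

lemma lm_div:
  assumes m: "0 < m" and p: "p \<in> (I_det m k :: 'a::field mpoly set)" and p0: "p \<noteq> 0"
  shows "\<exists>l<k. mle (sqfree_mon (MS m l)) (lead_mon p)"
proof -
  interpret gbl "vars m k" k "gg m k :: nat \<Rightarrow> 'a mpoly" "\<lambda>l. sqfree_mon (MS m l)" "\<lambda>l. of_int (sign (sigf m l))"
    by (rule gbl_inst[OF m])
  show ?thesis using gb[OF order.refl I_det_J[OF m p] p0] .
qed

lemma gg_in_I: "(gg m k l :: 'a::comm_ring_1 mpoly) \<in> I_det m k" if "l < k"
proof -
  have "(gg m k l :: 'a mpoly) \<in> det_gens m k" using that unfolding det_gens_def gg_def by blast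
  moreover have "(gg m k l :: 'a mpoly) = (\<Sum>g\<in>{gg m k l}. (\<lambda>_. 1) g * g)" by simp
  moreover have "(1 :: 'a mpoly) \<in> S_ring m k" by (simp add: S_ring_SR)
  ultimately show ?thesis unfolding I_det_def ideal_gen_def
    by (intro CollectI exI[of _ "{gg m k l}"] exI[of _ "\<lambda>_. 1"]) auto
qed

lemma LM_char:
  assumes m: "0 < m" and A: "A \<subseteq> vars m k"
  shows "mon_poly (sqfree_mon A) \<in> LM_ideal (S_ring m k) (I_det m k :: 'a::field mpoly set)
     \<longleftrightarrow> (\<exists>l<k. MS m l \<subseteq> A)"
proof
  have finA: "finite A" using A finite_vars finite_subset by blast
  assume "mon_poly (sqfree_mon A) \<in> LM_ideal (S_ring m k) (I_det m k :: 'a mpoly set)"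
  then obtain H c where H: "finite H" "H \<subseteq> {mon_poly (lead_mon p) | p. p \<in> (I_det m k :: 'a mpoly set) \<and> p \<noteq> 0}"
    "\<forall>g\<in>H. c g \<in> S_ring m k" "(mon_poly (sqfree_mon A) :: 'a mpoly) = (\<Sum>g\<in>H. c g * g)"
    unfolding LM_ideal_def ideal_gen_def mem_Collect_eq by blast
  have "Poly_Mapping.lookup (mon_poly (sqfree_mon A) :: 'a mpoly) (sqfree_mon A) = 1"
    by (simp add: mon_poly_def)
  then have "Poly_Mapping.lookup (\<Sum>g\<in>H. c g * g) (sqfree_mon A) \<noteq> 0"
    using H(4) by simp
  then have "(\<Sum>g\<in>H. Poly_Mapping.lookup (c g * g) (sqfree_mon A)) \<noteq> 0"
    by (simp add: lookup_sum)
  then obtain h where h: "h \<in> H" "Poly_Mapping.lookup (c h * h) (sqfree_mon A) \<noteq> 0"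
    by (rule sum.not_neutral_contains_not_neutral)
  obtain p where p: "p \<in> (I_det m k :: 'a mpoly set)" "p \<noteq> 0" "h = mon_poly (lead_mon p)"
    using H(2) h(1) by blast
  have "sqfree_mon A \<in> Poly_Mapping.keys (c h * h)" using h(2) by (simp add: in_keys_iff)
  then obtain a b where ab: "b \<in> Poly_Mapping.keys h" "sqfree_mon A = a + b"
    using keys_mult[of "c h" h] by blast
  have "b = lead_mon p" using ab(1) p(3) by (simp add: mon_poly_def)
  then have "mle (lead_mon p) (sqfree_mon A)" using ab(2) mle_add_left by simp
  moreover obtain l where l: "l < k" "mle (sqfree_mon (MS m l)) (lead_mon p)"
    using lm_div[OF m p(1,2)] by blast
  ultimately have "mle (sqfree_mon (MS m l)) (sqfree_mon A)" using mle_trans by blast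
  then have "MS m l \<subseteq> A" using mle_sqfree[OF _ finA] by (simp add: MS_def)
  then show "\<exists>l<k. MS m l \<subseteq> A" using l(1) by blast
next
  have finA: "finite A" using A finite_vars finite_subset by blast
  assume "\<exists>l<k. MS m l \<subseteq> A"
  then obtain l where l: "l < k" "MS m l \<subseteq> A" by blast
  let ?B = "MS m l"
  have finB: "finite ?B" by (simp add: MS_def)
  have gI: "(gg m k l :: 'a mpoly) \<in> I_det m k" using gg_in_I[OF l(1)] .
  have g0: "(gg m k l :: 'a mpoly) \<noteq> 0" using top_nonzero[OF gg_top[OF m l(1)]] .
  have gen: "(mon_poly (sqfree_mon ?B) :: 'a mpoly) \<in> {mon_poly (lead_mon p) | p. p \<in> (I_det m k :: 'a mpoly set) \<and> p \<noteq> 0}"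
  proof -
    have lg: "lead_mon (gg m k l :: 'a mpoly) = sqfree_mon (MS m l)" by (rule lead_gg[OF m l(1)])
    have "(mon_poly (sqfree_mon ?B) :: 'a mpoly) = mon_poly (lead_mon (gg m k l :: 'a mpoly))"
      by (simp only: lg)
    then show ?thesis using gI g0 by blast
  qed
  have un: "sqfree_mon A = sqfree_mon (A - ?B) + sqfree_mon ?B"
  proof -
    have "A = (A - ?B) \<union> ?B" using l(2) by blast
    then have "sqfree_mon A = sqfree_mon ((A - ?B) \<union> ?B)" by simp
    also have "\<dots> = sqfree_mon (A - ?B) + sqfree_mon ?B"
      by (rule sqfree_union) (use finA finB in auto)
    finally show ?thesis .
  qed
  have eq: "(mon_poly (sqfree_mon A) :: 'a mpoly) = Poly_Mapping.single (sqfree_mon (A - ?B)) 1 * mon_poly (sqfree_mon ?B)"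
    unfolding mon_poly_def by (simp add: mult_single un)
  have cS: "(Poly_Mapping.single (sqfree_mon (A - ?B)) 1 :: 'a mpoly) \<in> S_ring m k"
    unfolding S_ring_SR by (rule SR_single) (use A finA in \<open>auto simp: keys_sqfree\<close>)
  show "mon_poly (sqfree_mon A) \<in> LM_ideal (S_ring m k) (I_det m k :: 'a mpoly set)"
    unfolding LM_ideal_def ideal_gen_def
    apply (rule CollectI)
    apply (rule exI[of _ "{mon_poly (sqfree_mon ?B)}"])
    apply (rule exI[of _ "\<lambda>_. Poly_Mapping.single (sqfree_mon (A - ?B)) 1"])
    using gen cS eq by simp
qed

lemma SR_complex_char:
  assumes m: "0 < m"
  shows "SR_complex (vars m k) (LM_ideal (S_ring m k) (I_det m k :: 'a::field mpoly set))
    = {A. A \<subseteq> vars m k \<and> (\<forall>l<k. \<not> MS m l \<subseteq> A)}"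
  unfolding SR_complex_def using LM_char[OF m] by blast


abbreviation XX :: "int poly" where "XX \<equiv> monom 1 1"

lemma monom_Suc_XX: "monom (1::int) (Suc n) = XX * monom 1 n"
  by (simp add: mult_monom)

lemma pow_gen:
  assumes "finite W"
  shows "(\<Sum>A\<in>Pow W. monom (1::int) (card A)) = (1 + XX) ^ card W"
  using assms
proof (induction W rule: finite_induct)
  case empty then show ?case by simp
next
  case (insert a W)
  have disj: "Pow W \<inter> insert a ` Pow W = {}" using insert.hyps(2) by blast
  have inj: "inj_on (insert a) (Pow W)"
  proof (rule inj_onI)
    fix x y assume x: "x \<in> Pow W" and y: "y \<in> Pow W" and e: "insert a x = insert a y"
    have "a \<notin> x" "a \<notin> y" using x y insert.hyps(2) by blast+
    then show "x = y" using e by (metis Diff_insert_absorb)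
  qed
  have finP: "finite (Pow W)" "finite (insert a ` Pow W)" using insert.hyps(1) by simp_all
  have s1: "(\<Sum>A\<in>Pow (insert a W). monom (1::int) (card A)) =
      (\<Sum>A\<in>Pow W. monom 1 (card A)) + (\<Sum>A\<in>insert a ` Pow W. monom 1 (card A))"
    unfolding Pow_insert by (rule sum.union_disjoint[OF finP disj])
  have s2: "(\<Sum>A\<in>insert a ` Pow W. monom (1::int) (card A)) = (\<Sum>A\<in>Pow W. monom 1 (card (insert a A)))"
    by (simp only: sum.reindex[OF inj] comp_def)
  have s3: "(\<Sum>A\<in>Pow W. monom (1::int) (card (insert a A))) = (\<Sum>A\<in>Pow W. XX * monom 1 (card A))"
  proof (rule sum.cong[OF refl])
    fix A assume "A \<in> Pow W"
    then have AW: "A \<subseteq> W" by simp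
    then have "finite A" using insert.hyps(1) by (rule finite_subset)
    moreover have "a \<notin> A" using AW insert.hyps(2) by blast
    ultimately show "monom (1::int) (card (insert a A)) = XX * monom 1 (card A)"
      by (simp add: mult_monom)
  qed
  have s4: "(\<Sum>A\<in>Pow W. XX * monom (1::int) (card A)) = XX * (1 + XX) ^ card W"
    by (simp only: sum_distrib_left[symmetric] insert.IH)
  have "(\<Sum>A\<in>Pow (insert a W). monom (1::int) (card A)) = (1 + XX) ^ card W + XX * (1 + XX) ^ card W"
    using s1 s2 s3 s4 insert.IH by simp
  also have "\<dots> = (1 + XX) ^ Suc (card W)" by (simp add: distrib_right)
  also have "Suc (card W) = card (insert a W)" using insert.hyps by simp
  finally show ?case .
qed

lemma sum_const_monom: "(\<Sum>C\<in>S. monom (1::int) j) = monom (int (card S)) j"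
proof -
  have "(\<Sum>C\<in>S. monom (1::int) j) = of_nat (card S) * monom 1 j" by simp
  also have "\<dots> = monom (int (card S)) j"
    by (simp add: of_nat_poly mult_monom smult_monom)
  finally show ?thesis .
qed

definition PP :: "nat \<Rightarrow> int poly" where
  "PP m = (\<Sum>j<m. monom (int (m choose j)) j)"

lemma proper_gen:
  assumes "finite B" "card B = m"
  shows "(\<Sum>C\<in>Pow B - {B}. monom (1::int) (card C)) = PP m"
proof -
  let ?S = "\<lambda>j. {C. C \<subseteq> B \<and> card C = j}"
  have eq: "Pow B - {B} = (\<Union>j\<in>{..<m}. ?S j)"
  proof
    show "Pow B - {B} \<subseteq> (\<Union>j\<in>{..<m}. ?S j)"
    proof
      fix C assume "C \<in> Pow B - {B}"
      then have "C \<subset> B" by auto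
      then have "card C < m" using psubset_card_mono assms by blast
      then show "C \<in> (\<Union>j\<in>{..<m}. ?S j)" using \<open>C \<subset> B\<close> by auto
    qed
    show "(\<Union>j\<in>{..<m}. ?S j) \<subseteq> Pow B - {B}" using assms by auto
  qed
  have fin: "\<forall>j\<in>{..<m}. finite (?S j)"
  proof
    fix j have "?S j \<subseteq> Pow B" by auto
    then show "finite (?S j)" using finite_Pow_iff assms(1) by (metis finite_subset)
  qed
  have "(\<Sum>C\<in>Pow B - {B}. monom (1::int) (card C)) = (\<Sum>j<m. \<Sum>C\<in>?S j. monom (1::int) (card C))"
    unfolding eq by (rule sum.UNION_disjoint) (use fin in auto)
  also have "\<dots> = (\<Sum>j<m. \<Sum>C\<in>?S j. monom (1::int) j)"
    by (intro sum.cong refl) auto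
  also have "\<dots> = (\<Sum>j<m. monom (int (m choose j)) j)"
    by (intro sum.cong refl) (simp only: sum_const_monom n_subsets[OF assms(1)] assms(2))
  finally show ?thesis by (simp add: PP_def)
qed

lemma count_gen:
  fixes B :: "nat \<Rightarrow> 'v set"
  assumes "finite W"
    and "\<forall>l<n. B l \<subseteq> W \<and> card (B l) = m"
    and "\<forall>l<n. \<forall>l'<n. l \<noteq> l' \<longrightarrow> B l \<inter> B l' = {}"
  shows "(\<Sum>A\<in>{A. A \<subseteq> W \<and> (\<forall>l<n. \<not> B l \<subseteq> A)}. monom (1::int) (card A))
          = PP m ^ n * (1 + XX) ^ (card W - n * m)"
  using assms
proof (induction n arbitrary: W)
  case 0
  have "{A. A \<subseteq> W \<and> (\<forall>l<0. \<not> B l \<subseteq> A)} = Pow W" by auto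
  then show ?case using pow_gen[OF 0(1)] by simp
next
  case (Suc n)
  let ?Bn = "B n"
  let ?W' = "W - ?Bn"
  let ?F = "\<lambda>W n. {A. A \<subseteq> W \<and> (\<forall>l<n. \<not> B l \<subseteq> A)}"
  have Bn: "?Bn \<subseteq> W" "card ?Bn = m" using Suc.prems(2) by auto
  have finBn: "finite ?Bn" using Bn(1) Suc.prems(1) by (rule finite_subset)
  have IH: "(\<Sum>A\<in>?F ?W' n. monom (1::int) (card A)) = PP m ^ n * (1 + XX) ^ (card ?W' - n * m)"
  proof (rule Suc.IH)
    show "finite ?W'" using Suc.prems(1) by simp
    show "\<forall>l<n. B l \<subseteq> ?W' \<and> card (B l) = m"
    proof (intro allI impI)
      fix l assume "l < n"
      then have "B l \<inter> ?Bn = {}" "B l \<subseteq> W" "card (B l) = m" using Suc.prems(2,3) by auto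
      then show "B l \<subseteq> ?W' \<and> card (B l) = m" by blast
    qed
    show "\<forall>l<n. \<forall>l'<n. l \<noteq> l' \<longrightarrow> B l \<inter> B l' = {}" using Suc.prems(3) by auto
  qed
  have PB: "(\<Sum>C\<in>Pow ?Bn - {?Bn}. monom (1::int) (card C)) = PP m" by (rule proper_gen[OF finBn Bn(2)])
  let ?G = "\<lambda>(A, C). A \<union> C"
  have img: "?F W (Suc n) = ?G ` (?F ?W' n \<times> (Pow ?Bn - {?Bn}))"
  proof
    show "?F W (Suc n) \<subseteq> ?G ` (?F ?W' n \<times> (Pow ?Bn - {?Bn}))"
    proof
      fix X assume X: "X \<in> ?F W (Suc n)"
      have 1: "X - ?Bn \<in> ?F ?W' n"
      proof -
        have "\<not> B l \<subseteq> X - ?Bn" if "l < n" for l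
        proof
          assume "B l \<subseteq> X - ?Bn"
          then have "B l \<subseteq> X" by blast
          moreover have "l < Suc n" using that by simp
          ultimately show False using X by blast
        qed
        then show ?thesis using X by blast
      qed
      have 2: "X \<inter> ?Bn \<in> Pow ?Bn - {?Bn}" using X by auto
      have "X = ?G (X - ?Bn, X \<inter> ?Bn)" by auto
      then show "X \<in> ?G ` (?F ?W' n \<times> (Pow ?Bn - {?Bn}))" using 1 2 by blast
    qed
    show "?G ` (?F ?W' n \<times> (Pow ?Bn - {?Bn})) \<subseteq> ?F W (Suc n)"
    proof
      fix X assume "X \<in> ?G ` (?F ?W' n \<times> (Pow ?Bn - {?Bn}))"
      then obtain A C where AC: "A \<in> ?F ?W' n" "C \<in> Pow ?Bn - {?Bn}" "X = A \<union> C" by auto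
      have "X \<subseteq> W" using AC Bn(1) by auto
      moreover have "\<not> B l \<subseteq> X" if "l < Suc n" for l
      proof (cases "l = n")
        case True
        show ?thesis
        proof
          assume "B l \<subseteq> X"
          then have "?Bn \<subseteq> C" using AC True by auto
          then show False using AC(2) by auto
        qed
      next
        case False
        then have "l < n" using that by simp
        then have d: "B l \<inter> ?Bn = {}" using Suc.prems(3) by auto
        show ?thesis
        proof
          assume "B l \<subseteq> X"
          then have "B l \<subseteq> A" using AC d by auto
          then show False using AC(1) \<open>l < n\<close> by auto
        qed
      qed
      ultimately show "X \<in> ?F W (Suc n)" by blast
    qed
  qed
  have inj: "inj_on ?G (?F ?W' n \<times> (Pow ?Bn - {?Bn}))"
  proof (rule inj_onI)
    fix x y assume x: "x \<in> ?F ?W' n \<times> (Pow ?Bn - {?Bn})" and y: "y \<in> ?F ?W' n \<times> (Pow ?Bn - {?Bn})"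
      and e: "?G x = ?G y"
    obtain A C where xe: "x = (A, C)" by (cases x)
    obtain A' C' where ye: "y = (A', C')" by (cases y)
    have "A = (A \<union> C) - ?Bn" "C = (A \<union> C) \<inter> ?Bn" using x xe by auto
    moreover have "A' = (A' \<union> C') - ?Bn" "C' = (A' \<union> C') \<inter> ?Bn" using y ye by auto
    ultimately show "x = y" using e xe ye by simp
  qed
  have finF: "finite (?F ?W' n)"
  proof -
    have "?F ?W' n \<subseteq> Pow ?W'" by auto
    moreover have "finite (Pow ?W')" using Suc.prems(1) by simp
    ultimately show ?thesis by (rule finite_subset)
  qed
  have finP: "finite (Pow ?Bn - {?Bn})" using finBn by simp
  have "(\<Sum>X\<in>?F W (Suc n). monom (1::int) (card X))
      = (\<Sum>x\<in>?F ?W' n \<times> (Pow ?Bn - {?Bn}). monom (1::int) (card (?G x)))"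
    unfolding img by (simp add: sum.reindex[OF inj])
  also have "\<dots> = (\<Sum>x\<in>?F ?W' n \<times> (Pow ?Bn - {?Bn}). (\<lambda>(A, C). monom (1::int) (card A) * monom 1 (card C)) x)"
  proof (rule sum.cong[OF refl])
    fix x assume x: "x \<in> ?F ?W' n \<times> (Pow ?Bn - {?Bn})"
    obtain A C where xe: "x = (A, C)" by (cases x)
    have "A \<subseteq> W" using x xe by auto
    then have "finite A" using Suc.prems(1) by (rule finite_subset)
    moreover have "C \<subseteq> ?Bn" using x xe by auto
    then have "finite C" using finBn by (rule finite_subset)
    moreover have "A \<inter> C = {}" using x xe by auto
    ultimately have "card (A \<union> C) = card A + card C" by (rule card_Un_disjoint)
    then show "monom (1::int) (card (?G x)) = (\<lambda>(A, C). monom (1::int) (card A) * monom 1 (card C)) x"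
      using xe by (simp add: mult_monom)
  qed
  also have "\<dots> = (\<Sum>A\<in>?F ?W' n. monom (1::int) (card A)) * (\<Sum>C\<in>Pow ?Bn - {?Bn}. monom 1 (card C))"
    by (simp only: sum_product sum.cartesian_product)
  also have "\<dots> = PP m ^ n * (1 + XX) ^ (card ?W' - n * m) * PP m" using IH PB by simp
  also have "card ?W' = card W - m" using Bn finBn by (simp add: card_Diff_subset)
  finally show ?case by (simp add: algebra_simps diff_diff_left)
qed


lemma poly_stmt_PP: "(\<Sum>j<m. [:0, 1:] ^ j * [:int (m choose j):]) = PP m"
  unfolding PP_def
proof (rule sum.cong[OF refl])
  fix j
  show "[:0, 1:] ^ j * [:int (m choose j):] = monom (int (m choose j)) j"
    by (simp add: monom_altdef mult.commute)
qed

lemma XX_eq: "1 + XX = [:1, 1:]"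
  by (simp add: monom_altdef one_pCons)

lemma coeff_PP: "coeff (PP m) n = (if n < m then int (m choose n) else 0)"
proof -
  have "coeff (PP m) n = (\<Sum>j<m. if j = n then int (m choose j) else 0)"
    unfolding PP_def coeff_sum by (intro sum.cong refl) auto
  also have "\<dots> = (if n < m then int (m choose n) else 0)"
    by (simp add: sum.delta')
  finally show ?thesis .
qed

lemma degree_PP: assumes "0 < m" shows "degree (PP m) = m - 1" "lead_coeff (PP m) = int m"
proof -
  have c: "coeff (PP m) (m - 1) = int m"
  proof -
    obtain t where t: "m = Suc t" using assms not0_implies_Suc by blast
    show ?thesis using t by (simp add: coeff_PP)
  qed
  have "degree (PP m) \<le> m - 1"
    by (rule degree_le) (auto simp: coeff_PP)
  moreover have "m - 1 \<le> degree (PP m)"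
    by (rule le_degree) (use c assms in simp)
  ultimately show d: "degree (PP m) = m - 1" by simp
  show "lead_coeff (PP m) = int m" using c d by simp
qed

lemma gen_coeff:
  assumes "finite D"
  shows "coeff (\<Sum>A\<in>D. monom (1::int) (card A)) l = int (card {A \<in> D. card A = l})"
proof -
  have "coeff (\<Sum>A\<in>D. monom (1::int) (card A)) l = (\<Sum>A\<in>D. if card A = l then 1 else 0)"
    by (simp add: coeff_sum)
  also have "\<dots> = (\<Sum>A\<in>{A \<in> D. card A = l}. 1)"
    by (rule sum.inter_filter[symmetric, OF assms])
  also have "\<dots> = int (card {A \<in> D. card A = l})" by simp
  finally show ?thesis .
qed

theorem proposition3p7:
  fixes m k :: nat
  defines "b \<equiv> k * (m^2 - m)"
    and "\<Delta> \<equiv> SR_complex (vars m k) (LM_ideal (S_ring m k) (I_det m k :: 'a::alg_closed_field mpoly set))"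
  assumes "m \<ge> 2" and "k \<ge> 1"
  shows "sc_dim \<Delta> = int (k * (m^2 - 1)) - 1
    \<and> (\<forall>l. 1 \<le> l \<and> l \<le> k * (m^2 - 1) \<longrightarrow>
           int (f_vec \<Delta> l) = coeff ((\<Sum>j<m. [:0, 1:] ^ j * [:int (m choose j):]) ^ k * [:1, 1:] ^ b) l)
    \<and> f_vec \<Delta> (k * (m^2 - 1)) = m ^ k"
proof -
  have m0: "0 < m" using assms(3) by simp
  let ?V = "vars m k"
  let ?G = "(\<Sum>j<m. [:0, 1:] ^ j * [:int (m choose j):]) ^ k * [:1, 1:] ^ b"
  define D where "D = k * (m^2 - 1)"
  have Dchar: "\<Delta> = {A. A \<subseteq> ?V \<and> (\<forall>l<k. \<not> MS m l \<subseteq> A)}"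
    unfolding \<Delta>_def by (rule SR_complex_char[OF m0])
  have finD: "finite \<Delta>"
  proof -
    have "\<Delta> \<subseteq> Pow ?V" using Dchar by auto
    moreover have "finite (Pow ?V)" using finite_vars by simp
    ultimately show ?thesis by (rule finite_subset)
  qed
  have cnt: "(\<Sum>A\<in>\<Delta>. monom (1::int) (card A)) = PP m ^ k * (1 + XX) ^ (card ?V - k * m)"
    unfolding Dchar
  proof (rule count_gen)
    show "finite ?V" by (rule finite_vars)
    show "\<forall>l<k. MS m l \<subseteq> ?V \<and> card (MS m l) = m" using MS_sub_vars[OF m0] card_MS by blast
    show "\<forall>l<k. \<forall>l'<k. l \<noteq> l' \<longrightarrow> MS m l \<inter> MS m l' = {}" using MS_disj[OF m0] by blast
  qed
  have bV: "card ?V - k * m = b"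
    unfolding b_def card_vars by (simp add: power2_eq_square diff_mult_distrib2)
  have Gpp: "?G = PP m ^ k * [:1, 1:] ^ b" by (simp only: poly_stmt_PP)
  have Geq: "?G = (\<Sum>A\<in>\<Delta>. monom (1::int) (card A))"
    unfolding Gpp cnt bV XX_eq ..
  have fv: "int (f_vec \<Delta> l) = coeff ?G l" for l
    unfolding Geq f_vec_def by (rule gen_coeff[OF finD, symmetric])
  have P0: "PP m \<noteq> 0" using degree_PP(2)[OF m0] m0 by auto
  have Q0: "[:1, 1:] \<noteq> (0 :: int poly)" by simp
  have degG: "degree ?G = k * (m - 1) + b"
    unfolding Gpp by (simp add: degree_mult_eq degree_power_eq P0 Q0 degree_PP(1)[OF m0])
  have lcG: "lead_coeff ?G = int m ^ k"
    unfolding Gpp lead_coeff_mult lead_coeff_power degree_PP(2)[OF m0] by simp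
  have DG: "D = k * (m - 1) + b"
  proof -
    have "m \<le> m * m" using m0 by simp
    then have "m * m - 1 = (m - 1) + (m * m - m)" using m0 by linarith
    then show ?thesis unfolding D_def b_def power2_eq_square by (simp add: algebra_simps)
  qed
  have topf: "f_vec \<Delta> D = m ^ k"
  proof -
    have "int (f_vec \<Delta> D) = coeff ?G D" by (rule fv)
    also have "\<dots> = int m ^ k" using lcG degG DG by simp
    finally show ?thesis by (simp add: of_nat_eq_iff[symmetric])
  qed
  have bound: "card A \<le> D" if "A \<in> \<Delta>" for A
  proof -
    have "A \<in> {B \<in> \<Delta>. card B = card A}" using that by simp
    moreover have "finite {B \<in> \<Delta>. card B = card A}" using finD by simp
    ultimately have "f_vec \<Delta> (card A) \<noteq> 0" unfolding f_vec_def by (metis card_0_eq empty_iff)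
    then have "coeff ?G (card A) \<noteq> 0" using fv[of "card A"] by simp
    then have "card A \<le> degree ?G" by (rule le_degree)
    then show ?thesis using degG DG by simp
  qed
  have ex: "\<exists>A\<in>\<Delta>. card A = D"
  proof (rule ccontr)
    assume "\<not> ?thesis"
    then have e: "{A \<in> \<Delta>. card A = D} = {}" by blast
    have "f_vec \<Delta> D = card {A \<in> \<Delta>. card A = D}" by (simp only: f_vec_def)
    then have "f_vec \<Delta> D = 0" unfolding e by simp
    then show False using topf m0 by simp
  qed
  have Max: "Max (card ` \<Delta>) = D"
  proof (rule Max_eqI)
    show "finite (card ` \<Delta>)" using finD by simp
    show "\<And>y. y \<in> card ` \<Delta> \<Longrightarrow> y \<le> D" using bound by blast
    show "D \<in> card ` \<Delta>" using ex by force
  qed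
  show ?thesis
  proof (intro conjI allI impI)
    show "sc_dim \<Delta> = int (k * (m^2 - 1)) - 1" unfolding sc_dim_def Max D_def ..
    fix l show "int (f_vec \<Delta> l) = coeff ?G l" by (rule fv)
  next
    show "f_vec \<Delta> (k * (m^2 - 1)) = m ^ k" using topf by (simp add: D_def)
  qed
qed


end
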